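(* Let $g\ge1$ and $n\in\mathbb{Z}\setminus\{0\}$. Let $u_1,\dots,u_{2g+1}$ be pairwise distinct complex numbers varying in a small open set. Let $\gamma_1,\dots,\gamma_{2g}$ be a basis of the first homology of the curve $v^2=(u-u_1)\cdots(u-u_{2g+1})$, represented by cycles avoiding the branch points and infinity and transported continuously as the $u_j$ vary. Let $c_1,\dots,c_{2g}\in\mathbb{C}$ be arbitrary constants, and set $$a_i=\sum_{k=1}^{2g}c_k\oint_{\gamma_k}\frac{v^n\,du}{u-u_i},\qquad A^{(i)}=\begin{pmatrix} n/4 & a_i\\ 0 & -n/4\end{pmatrix},\qquad i=1,\dots,2g+1.$$ Then the matrices $A^{(i)}$ satisfy the Schlesinger system $$\frac{\partial A^{(j)}}{\partial u_k}=\frac{[A^{(k)},A^{(j)}]}{u_k-u_j}\ (k\ne j),\qquad \frac{\partial A^{(k)}}{\partial u_k}=-\sum_{j\neq k}\frac{[A^{(k)},A^{(j)}]}{u_k-u_j},$$ and $A^{(\infty)}:=-A^{(1)}-\dots-A^{(2g+1)}$ is constant. *)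

theory Defs
  imports "HOL-Analysis.Analysis"
begin

text \<open>Point u = (u_1,...,u_{2g+1}) is a vector x :: complex^'m, with CARD('m) = 2g+1.
  Replace the k-th coordinate by z.\<close>
definition vupd :: "complex^'m \<Rightarrow> 'm \<Rightarrow> complex \<Rightarrow> complex^'m" where
  "vupd x k z = (\<chi> i. if i = k then z else x $ i)"

text \<open>Integral of the form v^n du/(u - ui) along the closed cycle on the curve
  v^2 = prod_j (u - u_j) given by the u-path gam : [0,1] -> C together with the
  continuous lift w : [0,1] -> C of the v-coordinate.\<close>
definition hyp_integral :: "int \<Rightarrow> (real \<Rightarrow> complex) \<Rightarrow> (real \<Rightarrow> complex) \<Rightarrow> complex \<Rightarrow> complex" where
  "hyp_integral n gam w ui =
     integral {0..1} (\<lambda>t. (w t) powi n * vector_derivative gam (at t) / (gam t - ui))"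

definition schl_mat :: "int \<Rightarrow> complex \<Rightarrow> complex^2^2" where
  "schl_mat n a = (\<chi> r s. if r = 1 \<and> s = 1 then of_int n / 4
                           else if r = 1 \<and> s = 2 then a
                           else if r = 2 \<and> s = 2 then - (of_int n / 4) else 0)"

definition commutator :: "complex^2^2 \<Rightarrow> complex^2^2 \<Rightarrow> complex^2^2" where
  "commutator A B = A ** B - B ** A"

definition msmul :: "complex \<Rightarrow> complex^2^2 \<Rightarrow> complex^2^2" where
  "msmul c M = (\<chi> r s. c * M $ r $ s)"

definition mat_has_deriv :: "(complex \<Rightarrow> complex^2^2) \<Rightarrow> complex^2^2 \<Rightarrow> complex \<Rightarrow> bool" where
  "mat_has_deriv F D z0 \<longleftrightarrow> (\<forall>r s. ((\<lambda>z. F z $ r $ s) has_field_derivative D $ r $ s) (at z0))"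

end

theory Submission
  imports Defs "HOL-Complex_Analysis.Complex_Analysis"
begin

no_notation fps_nth (infixl \<open>$\<close> 75)

lemma sign_lemma:
  fixes f :: "'a::topological_space \<Rightarrow> complex"
  assumes "connected S" "continuous_on S f" "\<And>x. x\<in>S \<Longrightarrow> (f x)^2 = 1" "a \<in> S" "f a = 1" "x \<in> S"
  shows "f x = 1"
proof -
  have sub: "f ` S \<subseteq> {1, -1}"
    using assms(3) by (auto simp: power2_eq_1_iff)
  have "connected (f ` S)" using assms connected_continuous_image by blast
  moreover have "finite (f ` S)" using sub finite_subset by blast
  ultimately obtain b where "f ` S = {} \<or> f ` S = {b}" using connected_finite_iff_sing by blast
  then show ?thesis using assms(4,5,6) by (metis empty_iff image_eqI singletonD)
qed

lemma not_nonpos_if_near1: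
  fixes w :: complex
  assumes "norm (w - 1) < 1"
  shows "w \<notin> \<real>\<^sub>\<le>\<^sub>0"
proof
  assume "w \<in> \<real>\<^sub>\<le>\<^sub>0"
  then have "Re w \<le> 0" "Im w = 0" by (auto simp: complex_nonpos_Reals_iff)
  then have "norm (w - 1) \<ge> 1"
    using abs_Re_le_cmod[of "w-1"] by auto
  with assms show False by simp
qed

lemma P_deriv:
  fixes xs :: "'m::finite \<Rightarrow> complex"
  assumes "\<forall>j. u \<noteq> xs j"
  shows "((\<lambda>u. \<Prod>j\<in>UNIV. u - xs j) has_field_derivative
          (\<Prod>j\<in>UNIV. u - xs j) * (\<Sum>j\<in>UNIV. 1 / (u - xs j))) (at u)"
proof -
  have "((\<lambda>u. \<Prod>j\<in>UNIV. (\<lambda>j u. u - xs j) j u) has_field_derivative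
          (\<Prod>j\<in>UNIV. (\<lambda>j u. u - xs j) j u) * (\<Sum>j\<in>UNIV. 1 / (\<lambda>j u. u - xs j) j u)) (at u)"
    by (rule has_field_derivative_prod') (use assms in \<open>auto intro!: derivative_eq_intros\<close>)
  then show ?thesis by simp
qed

lemma pieces_integral:
  fixes f :: "real \<Rightarrow> complex"
  assumes "N > 0" "\<And>i. i < N \<Longrightarrow> (f has_integral I i) {real i / real N .. real (Suc i) / real N}"
  shows "(f has_integral (\<Sum>i<N. I i)) {0..1}"
proof -
  have "m \<le> N \<Longrightarrow> (f has_integral (\<Sum>i<m. I i)) {0 .. real m / real N}" for m
  proof (induction m)
    case 0 then show ?case using has_integral_refl(1)[of f "0::real"] by simp
  next
    case (Suc m)
    have "(f has_integral ((\<Sum>i<m. I i) + I m)) {0 .. real (Suc m) / real N}"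
      by (rule has_integral_combine[of _ "real m / real N"])
        (use Suc assms in \<open>auto simp: divide_right_mono\<close>)
    then show ?case by simp
  qed
  from this[of N] assms(1) show ?thesis by simp
qed

locale hyp =
  fixes n :: int and gam :: "real \<Rightarrow> complex" and V :: "real \<Rightarrow> complex" and xs :: "'m::finite \<Rightarrow> complex"
  assumes vp: "valid_path gam" and cl: "gam 1 = gam 0"
    and avoid: "\<forall>t\<in>{0..1}. \<forall>j. gam t \<noteq> xs j"
    and curve: "\<forall>t\<in>{0..1}. (V t)^2 = (\<Prod>j\<in>UNIV. gam t - xs j)"
    and Vcont: "continuous_on {0..1} V"
    and Vcl: "V 1 = V 0"
begin

definition P where "P u = (\<Prod>j\<in>UNIV. u - xs j)"

definition dlt where "dlt = Min (range (\<lambda>j. infdist (xs j) (path_image gam)))"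

lemma gam_cont: "continuous_on {0..1} gam"
  using vp valid_path_imp_path path_def by blast

lemma dlt_pos: "dlt > 0"
proof -
  have "infdist (xs j) (path_image gam) > 0" for j
  proof -
    have "xs j \<notin> path_image gam" using avoid unfolding path_image_def by (metis (no_types, lifting) imageE)
    moreover have "closed (path_image gam)" using vp closed_path_image valid_path_imp_path by blast
    moreover have "path_image gam \<noteq> {}" by (simp add: path_image_def)
    ultimately show ?thesis using infdist_pos_not_in_closed by blast
  qed
  then show ?thesis unfolding dlt_def by (subst Min_gr_iff) auto
qed

lemma dlt_le: "t \<in> {0..1} \<Longrightarrow> dlt \<le> norm (gam t - xs j)"
proof -
  assume t: "t \<in> {0..1}"
  have "dlt \<le> infdist (xs j) (path_image gam)" unfolding dlt_def by (rule Min_le) auto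
  also have "\<dots> \<le> dist (xs j) (gam t)" using t by (intro infdist_le) (auto simp: path_image_def)
  finally show ?thesis by (simp add: dist_norm norm_minus_commute)
qed

definition SS where "SS = {u. \<forall>j. dlt/2 < norm (u - xs j)}"

lemma open_SS: "open SS"
proof -
  have "SS = (\<Inter>j\<in>UNIV. {u. dlt/2 < norm (u - xs j)})" by (auto simp: SS_def)
  also have "open \<dots>" by (auto intro!: open_INT open_Collect_less continuous_intros)
  finally show ?thesis .
qed

lemma gam_in_SS: assumes t: "t \<in> {0..1}" shows "gam t \<in> SS"
  unfolding SS_def
proof (intro CollectI allI)
  fix j show "dlt/2 < norm (gam t - xs j)" using dlt_le[OF t, of j] dlt_pos by linarith
qed

lemma SS_ne: assumes "u \<in> SS" shows "u \<noteq> xs j"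
proof -
  have "dlt/2 < norm (u - xs j)" using assms SS_def by auto
  then show ?thesis using dlt_pos by auto
qed

lemma P_nz: "u \<in> SS \<Longrightarrow> P u \<noteq> 0"
  unfolding P_def using SS_ne by auto

lemma V_nz: assumes t: "t \<in> {0..1}" shows "V t \<noteq> 0"
proof -
  have "(V t)^2 \<noteq> 0" using curve P_nz[OF gam_in_SS[OF t]] t unfolding P_def by auto
  then show ?thesis by auto
qed

lemma partition_ex: "\<exists>N>0. \<forall>i<N. \<forall>t\<in>{real i/real N..real (Suc i)/real N}. norm (gam t - gam (real i/real N)) < dlt/4"
proof -
  have "uniformly_continuous_on {0..1} gam"
    using compact_uniformly_continuous gam_cont compact_Icc by blast
  then obtain d where d: "d > 0" "\<forall>x\<in>{0..1}. \<forall>x'\<in>{0..1}. dist x' x < d \<longrightarrow> dist (gam x') (gam x) < dlt/4"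
    unfolding uniformly_continuous_on_def using dlt_pos by (metis zero_less_divide_iff zero_less_numeral)
  define N where "N = nat \<lceil>1/d\<rceil> + 1"
  have Npos: "N > 0" by (simp add: N_def)
  have "real N > 1/d" unfolding N_def using d by linarith
  then have Nd: "1 / real N < d" using d Npos by (simp add: divide_less_eq mult.commute pos_divide_less_eq)
  show ?thesis
  proof (intro exI[of _ N] conjI allI impI ballI Npos)
    fix i t assume i: "i < N" and t: "t \<in> {real i/real N..real (Suc i)/real N}"
    have i1: "real i / real N \<in> {0..1}" using i by auto
    have "real (Suc i) / real N \<le> 1" using i by auto
    have a: "real i / real N \<le> t" "t \<le> real (Suc i)/real N" using t by auto
    have "0 \<le> t" by (rule order_trans[OF _ a(1)]) simp
    then have t1: "t \<in> {0..1}" using a(2) \<open>real (Suc i) / real N \<le> 1\<close> by auto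
    have "t - real i / real N \<le> 1 / real N" using t by (auto simp: add_divide_distrib)
    then have "dist t (real i / real N) < d" using t Nd by (auto simp: dist_real_def)
    then show "norm (gam t - gam (real i/real N)) < dlt/4" using d i1 t1 by (auto simp: dist_norm)
  qed
qed

definition NN where "NN = (SOME N. N>0 \<and> (\<forall>i<N. \<forall>t\<in>{real i/real N..real (Suc i)/real N}. norm (gam t - gam (real i/real N)) < dlt/4))"

lemma NN: "NN > 0" "i < NN \<Longrightarrow> t\<in>{real i/real NN..real (Suc i)/real NN} \<Longrightarrow> norm (gam t - gam (real i/real NN)) < dlt/4"
  using someI_ex[OF partition_ex] unfolding NN_def[symmetric] by blast+

definition tt where "tt i = real i / real NN"
definition cc where "cc i = gam (tt i)"

lemma piece_sub: "i < NN \<Longrightarrow> {tt i .. tt (Suc i)} \<subseteq> {0..1}"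
  unfolding tt_def using NN(1) by auto

lemma tt_in: "i < NN \<Longrightarrow> tt i \<in> {0..1}" "i < NN \<Longrightarrow> tt (Suc i) \<in> {0..1}"
  "i < NN \<Longrightarrow> tt i \<le> tt (Suc i)"
  unfolding tt_def using NN(1) by (auto simp: divide_right_mono)

lemma piece_near: "i < NN \<Longrightarrow> t \<in> {tt i .. tt (Suc i)} \<Longrightarrow> norm (gam t - cc i) < dlt/4"
  using NN(2) unfolding tt_def cc_def by blast

lemma ball_SS: "i < NN \<Longrightarrow> ball (cc i) (dlt/2) \<subseteq> SS"
proof
  fix u assume i: "i < NN" and u: "u \<in> ball (cc i) (dlt/2)"
  show "u \<in> SS" unfolding SS_def
  proof (intro CollectI allI)
    fix j
    have "dlt \<le> norm (cc i - xs j)" unfolding cc_def using dlt_le tt_in i by blast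
    moreover have "norm (cc i - xs j) \<le> norm (u - xs j) + norm (cc i - u)"
      using norm_triangle_ineq[of "u - xs j" "cc i - u"] by simp
    moreover have "norm (cc i - u) < dlt/2" using u by (simp add: dist_norm)
    ultimately show "dlt/2 < norm (u - xs j)" by linarith
  qed
qed

definition H where "H i u = V (tt i) * (\<Prod>j\<in>UNIV. csqrt ((u - xs j) / (cc i - xs j)))"

lemma ratio_ok:
  assumes i: "i < NN" and u: "u \<in> ball (cc i) (dlt/2)"
  shows "(u - xs j) / (cc i - xs j) \<notin> \<real>\<^sub>\<le>\<^sub>0"
proof -
  have d: "dlt \<le> norm (cc i - xs j)" unfolding cc_def using dlt_le tt_in i by blast
  then have nz: "cc i - xs j \<noteq> 0" using dlt_pos by auto
  have "(u - xs j) / (cc i - xs j) - 1 = (u - cc i) / (cc i - xs j)"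
    using nz by (simp add: field_simps)
  also have "norm \<dots> = norm (u - cc i) / norm (cc i - xs j)" by (simp add: norm_divide)
  also have "\<dots> < 1"
    using u d dlt_pos by (simp add: dist_norm norm_minus_commute divide_less_eq)
  finally show ?thesis by (rule not_nonpos_if_near1)
qed

lemma H_holo: "i < NN \<Longrightarrow> H i holomorphic_on ball (cc i) (dlt/2)"
  unfolding H_def using ratio_ok by (auto intro!: holomorphic_intros)

lemma H_sq: assumes i: "i < NN" and u: "u \<in> ball (cc i) (dlt/2)" shows "(H i u)^2 = P u"
proof -
  have c: "cc i \<in> SS" unfolding cc_def using gam_in_SS tt_in i by blast
  have "(H i u)^2 = (V (tt i))^2 * (\<Prod>j\<in>UNIV. (u - xs j) / (cc i - xs j))"
    unfolding H_def by (simp add: power_mult_distrib prod_power_distrib)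
  also have "(V (tt i))^2 = P (cc i)" using curve tt_in i unfolding P_def cc_def by blast
  also have "(\<Prod>j\<in>UNIV. (u - xs j) / (cc i - xs j)) = P u / P (cc i)"
    unfolding P_def by (simp add: prod_dividef)
  finally show ?thesis using P_nz[OF c] by simp
qed

lemma H_nz: "i < NN \<Longrightarrow> u \<in> ball (cc i) (dlt/2) \<Longrightarrow> H i u \<noteq> 0"
  using H_sq P_nz ball_SS by (metis power_zero_numeral subsetD)

lemma H_center: "i < NN \<Longrightarrow> H i (cc i) = V (tt i)"
proof -
  assume i: "i < NN"
  have "cc i - xs j \<noteq> 0" for j using SS_ne gam_in_SS tt_in i unfolding cc_def by auto
  then show ?thesis unfolding H_def by simp
qed

lemma V_eq_H: assumes i: "i < NN" and t: "t \<in> {tt i .. tt (Suc i)}" shows "V t = H i (gam t)"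
proof -
  have inball: "gam s \<in> ball (cc i) (dlt/2)" if "s \<in> {tt i .. tt (Suc i)}" for s
    using piece_near[OF i that] dlt_pos by (simp add: dist_norm norm_minus_commute)
  define f where "f s = V s / H i (gam s)" for s
  have "f t = 1"
  proof (rule sign_lemma[of "{tt i .. tt (Suc i)}" f "tt i"])
    show "connected {tt i..tt (Suc i)}" by simp
    show "continuous_on {tt i..tt (Suc i)} f" unfolding f_def
    proof (rule continuous_on_divide)
      show "continuous_on {tt i..tt (Suc i)} V" using Vcont piece_sub i continuous_on_subset by blast
      have "continuous_on {tt i..tt (Suc i)} gam" using gam_cont piece_sub i continuous_on_subset by blast
      moreover have "continuous_on (ball (cc i) (dlt/2)) (H i)" using H_holo i holomorphic_on_imp_continuous_on by blast
      ultimately show "continuous_on {tt i..tt (Suc i)} (\<lambda>x. H i (gam x))"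
        using inball by (intro continuous_on_compose2[of "ball (cc i) (dlt/2)" "H i" _ gam]) auto
      show "\<forall>x\<in>{tt i..tt (Suc i)}. H i (gam x) \<noteq> 0" using H_nz i inball by blast
    qed
    show "\<And>x. x \<in> {tt i..tt (Suc i)} \<Longrightarrow> (f x)\<^sup>2 = 1"
    proof -
      fix x assume x: "x \<in> {tt i..tt (Suc i)}"
      have x1: "x \<in> {0..1}" using x piece_sub i by blast
      have "(V x)^2 = P (gam x)" using curve x1 unfolding P_def by blast
      moreover have "(H i (gam x))^2 = P (gam x)" using H_sq i inball x by blast
      moreover have "P (gam x) \<noteq> 0" using P_nz gam_in_SS x1 by blast
      ultimately show "(f x)^2 = 1" unfolding f_def by (simp add: power_divide)
    qed
    show "tt i \<in> {tt i..tt (Suc i)}" using tt_in i by auto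
    show "f (tt i) = 1" unfolding f_def using H_center[OF i] V_nz tt_in i cc_def by simp
    show "t \<in> {tt i..tt (Suc i)}" by fact
  qed
  then show ?thesis unfolding f_def using H_nz i inball t by (simp add: divide_eq_1_iff)
qed


lemma SG_ex: "\<exists>S. finite S \<and> (\<forall>t\<in>{0..1}-S. (gam has_vector_derivative vector_derivative gam (at t)) (at t))"
proof -
  obtain S D where S: "finite S" "\<forall>x\<in>{0..1}-S. (gam has_vector_derivative D x) (at x)"
    using vp unfolding valid_path_def piecewise_C1_differentiable_on_def C1_differentiable_on_def by blast
  then show ?thesis by (metis vector_derivative_at)
qed

definition SG where "SG = (SOME S. finite S \<and> (\<forall>t\<in>{0..1}-S. (gam has_vector_derivative vector_derivative gam (at t)) (at t)))"

lemma SG: "finite SG" "t \<in> {0..1} \<Longrightarrow> t \<notin> SG \<Longrightarrow> (gam has_vector_derivative vector_derivative gam (at t)) (at t)"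
  using someI_ex[OF SG_ex] unfolding SG_def[symmetric] by blast+

definition FF where "FF \<psi> t = V t powi n * \<psi> (gam t) * vector_derivative gam (at t)"

lemma tt_less: "tt i < tt (Suc i)"
  unfolding tt_def using NN(1) by (simp add: divide_strict_right_mono)

lemma inB: "i < NN \<Longrightarrow> t \<in> {tt i .. tt (Suc i)} \<Longrightarrow> gam t \<in> ball (cc i) (dlt/2)"
  using piece_near dlt_pos by (fastforce simp: dist_norm norm_minus_commute)

lemma piece_int:
  assumes i: "i < NN"
  and G: "\<forall>u\<in>ball (cc i) (dlt/2). (G has_field_derivative (H i u powi n * \<psi> u)) (at u within ball (cc i) (dlt/2))"
  shows "(FF \<psi> has_integral (G (gam (tt (Suc i))) - G (gam (tt i)))) {tt i .. tt (Suc i)}"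
proof -
  have pd: "gam piecewise_differentiable_on {tt i..tt (Suc i)}"
    using vp piece_sub[OF i] unfolding valid_path_def
    by (meson piecewise_C1_differentiable_on_subset piecewise_C1_imp_differentiable)
  have 1: "((\<lambda>t. H i (gam t) powi n * \<psi> (gam t) * vector_derivative gam (at t within {tt i..tt (Suc i)}))
        has_integral (G (gam (tt (Suc i))) - G (gam (tt i)))) {tt i..tt (Suc i)}"
    using contour_integral_primitive_lemma[of "tt i" "tt (Suc i)" "ball (cc i) (dlt/2)" G "\<lambda>u. H i u powi n * \<psi> u" gam]
      tt_in i G pd inB by auto
  show ?thesis
  proof (rule has_integral_spike_finite[where S="SG \<union> {tt i, tt (Suc i)}", OF _ _ 1])
    show "finite (SG \<union> {tt i, tt (Suc i)})" using SG by simp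
    fix x assume x: "x \<in> {tt i..tt (Suc i)} - (SG \<union> {tt i, tt (Suc i)})"
    then have x1: "x \<in> {0..1}" "x \<notin> SG" using piece_sub[OF i] by auto
    have "vector_derivative gam (at x within {tt i..tt (Suc i)}) = vector_derivative gam (at x)"
      using vector_derivative_at_within_ivl[OF SG(2)[OF x1]] x tt_less by auto
    moreover have "V x = H i (gam x)" using V_eq_H i x by blast
    ultimately show "FF \<psi> x = H i (gam x) powi n * \<psi> (gam x) * vector_derivative gam (at x within {tt i..tt (Suc i)})"
      unfolding FF_def by simp
  qed
qed

lemma Hpow_holo: "i < NN \<Longrightarrow> (\<lambda>u. H i u powi n) holomorphic_on ball (cc i) (dlt/2)"
  using H_holo H_nz by (auto intro!: holomorphic_intros)

lemma MM_ex: "i < NN \<Longrightarrow> \<exists>M. 0 \<le> M \<and> (\<forall>u\<in>cball (cc i) (dlt/4). norm (H i u powi n) \<le> M)"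
proof -
  assume i: "i < NN"
  have sub: "cball (cc i) (dlt/4) \<subseteq> ball (cc i) (dlt/2)" using dlt_pos by (intro cball_subset_ball_iff[THEN iffD2]) auto
  have "continuous_on (cball (cc i) (dlt/4)) (\<lambda>u. H i u powi n)"
    using holomorphic_on_imp_continuous_on[OF Hpow_holo[OF i]] sub continuous_on_subset by blast
  then have "compact ((\<lambda>u. H i u powi n) ` cball (cc i) (dlt/4))"
    by (intro compact_continuous_image) auto
  then obtain M where "\<forall>y\<in>(\<lambda>u. H i u powi n) ` cball (cc i) (dlt/4). norm y \<le> M"
    using compact_imp_bounded bounded_iff by metis
  then show ?thesis by (intro exI[of _ "max 0 M"]) auto
qed

definition MM where "MM i = (SOME M. 0 \<le> M \<and> (\<forall>u\<in>cball (cc i) (dlt/4). norm (H i u powi n) \<le> M))"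

lemma MM: "i < NN \<Longrightarrow> 0 \<le> MM i" "i < NN \<Longrightarrow> u \<in> cball (cc i) (dlt/4) \<Longrightarrow> norm (H i u powi n) \<le> MM i"
  using someI_ex[OF MM_ex] unfolding MM_def[symmetric] by blast+

lemma piece_main:
  assumes i: "i < NN" and holo: "\<psi> holomorphic_on SS"
  shows "\<exists>I. (FF \<psi> has_integral I) {tt i .. tt (Suc i)} \<and>
            (\<forall>m. (\<forall>u\<in>SS. norm (\<psi> u) \<le> m) \<longrightarrow> norm I \<le> MM i * m * (dlt/4))"
proof -
  let ?B = "ball (cc i) (dlt/2)"
  have h: "(\<lambda>u. H i u powi n * \<psi> u) holomorphic_on ?B"
    by (rule holomorphic_on_mult[OF Hpow_holo[OF i] holomorphic_on_subset[OF holo ball_SS[OF i]]])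
  obtain G where G: "\<And>u. u \<in> ?B \<Longrightarrow> (G has_field_derivative (H i u powi n * \<psi> u)) (at u within ?B)"
    using holomorphic_convex_primitive'[OF convex_ball open_ball h] by blast
  have int: "(FF \<psi> has_integral (G (gam (tt (Suc i))) - G (gam (tt i)))) {tt i .. tt (Suc i)}"
    using piece_int[OF i] G by blast
  have sub: "cball (cc i) (dlt/4) \<subseteq> ?B" using dlt_pos by (intro cball_subset_ball_iff[THEN iffD2]) auto
  have a: "gam (tt i) \<in> cball (cc i) (dlt/4)" by (simp add: cc_def dlt_pos less_imp_le)
  have b: "gam (tt (Suc i)) \<in> cball (cc i) (dlt/4)"
    using piece_near[OF i, of "tt (Suc i)"] tt_less by (auto simp: dist_norm norm_minus_commute less_imp_le)
  have seg: "closed_segment (gam (tt i)) (gam (tt (Suc i))) \<subseteq> cball (cc i) (dlt/4)"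
    using a b by (intro closed_segment_subset) auto
  have ci: "((\<lambda>u. H i u powi n * \<psi> u) has_contour_integral (G (gam (tt (Suc i))) - G (gam (tt i))))
              (linepath (gam (tt i)) (gam (tt (Suc i))))"
    using contour_integral_primitive[of ?B G "\<lambda>u. H i u powi n * \<psi> u" "linepath (gam (tt i)) (gam (tt (Suc i)))"]
      G seg sub by auto
  show ?thesis
  proof (intro exI[of _ "G (gam (tt (Suc i))) - G (gam (tt i))"] conjI int allI impI)
    fix m assume m: "\<forall>u\<in>SS. norm (\<psi> u) \<le> m"
    have m0: "0 \<le> m" using m a sub ball_SS[OF i] by (meson norm_ge_zero order_trans subsetD)
    have "norm (G (gam (tt (Suc i))) - G (gam (tt i))) \<le> (MM i * m) * norm (gam (tt (Suc i)) - gam (tt i))"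
    proof (rule has_contour_integral_bound_linepath[OF ci])
      show "0 \<le> MM i * m" using MM(1)[OF i] m0 by simp
      fix x assume "x \<in> closed_segment (gam (tt i)) (gam (tt (Suc i)))"
      then have x: "x \<in> cball (cc i) (dlt/4)" "x \<in> SS" using seg sub ball_SS[OF i] by auto
      show "norm (H i x powi n * \<psi> x) \<le> MM i * m"
        unfolding norm_mult using MM(2)[OF i x(1)] MM(1)[OF i] m x(2) by (intro mult_mono) auto
    qed
    also have "norm (gam (tt (Suc i)) - gam (tt i)) \<le> dlt/4"
      using b by (simp add: cc_def dist_norm norm_minus_commute)
    then have "(MM i * m) * norm (gam (tt (Suc i)) - gam (tt i)) \<le> MM i * m * (dlt/4)"
      using MM(1)[OF i] m0 by (intro mult_left_mono) auto
    finally show "norm (G (gam (tt (Suc i))) - G (gam (tt i))) \<le> MM i * m * (dlt / 4)" .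
  qed
qed

lemma FF_int: assumes "\<psi> holomorphic_on SS" shows "FF \<psi> integrable_on {0..1}"
proof -
  have "\<forall>i<NN. \<exists>I. (FF \<psi> has_integral I) {tt i .. tt (Suc i)}" using piece_main assms by blast
  then obtain I where "\<forall>i<NN. (FF \<psi> has_integral I i) {tt i .. tt (Suc i)}" by metis
  then have "(FF \<psi> has_integral (\<Sum>i<NN. I i)) {0..1}"
    using pieces_integral[OF NN(1)] unfolding tt_def by blast
  then show ?thesis by blast
qed

definition CC where "CC = (\<Sum>i<NN. MM i) * (dlt/4)"

lemma FF_bound: assumes "\<psi> holomorphic_on SS" "\<forall>u\<in>SS. norm (\<psi> u) \<le> m"
  shows "norm (integral {0..1} (FF \<psi>)) \<le> CC * m"
proof -
  have "\<forall>i<NN. \<exists>I. (FF \<psi> has_integral I) {tt i .. tt (Suc i)} \<and> norm I \<le> MM i * m * (dlt/4)"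
    using piece_main assms by blast
  then obtain I where I: "\<forall>i<NN. (FF \<psi> has_integral I i) {tt i .. tt (Suc i)} \<and> norm (I i) \<le> MM i * m * (dlt/4)" by metis
  then have "(FF \<psi> has_integral (\<Sum>i<NN. I i)) {0..1}"
    using pieces_integral[OF NN(1)] unfolding tt_def by blast
  then have "integral {0..1} (FF \<psi>) = (\<Sum>i<NN. I i)" by (rule integral_unique)
  also have "norm \<dots> \<le> (\<Sum>i<NN. norm (I i))" by (rule norm_sum)
  also have "\<dots> \<le> (\<Sum>i<NN. MM i * m * (dlt/4))" using I by (intro sum_mono) auto
  also have "\<dots> = CC * m" unfolding CC_def sum_distrib_right by (rule sum.cong) (simp_all add: mult_ac)
  finally show ?thesis .
qed

lemma CC_nonneg: "0 \<le> CC"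
  unfolding CC_def using MM(1) dlt_pos by (auto intro!: mult_nonneg_nonneg sum_nonneg)

lemma H_deriv:
  assumes i: "i < NN" and u: "u \<in> ball (cc i) (dlt/2)"
  shows "(H i has_field_derivative (H i u / 2 * (\<Sum>j\<in>UNIV. 1 / (u - xs j)))) (at u)"
proof -
  let ?B = "ball (cc i) (dlt/2)"
  define D where "D = deriv (H i) u"
  have hD: "(H i has_field_derivative D) (at u)"
    unfolding D_def using holomorphic_derivI[OF H_holo[OF i] open_ball u] by blast
  have 1: "((\<lambda>v. (H i v)^2) has_field_derivative (2 * H i u * D)) (at u)"
    using DERIV_power[OF hD, of 2] by (simp add: mult_ac)
  have uS: "u \<in> SS" using u ball_SS[OF i] by blast
  have "(P has_field_derivative (P u * (\<Sum>j\<in>UNIV. 1 / (u - xs j)))) (at u)"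
    using P_deriv[of u xs] SS_ne[OF uS] unfolding P_def[abs_def] by auto
  then have 2: "((\<lambda>v. (H i v)^2) has_field_derivative (P u * (\<Sum>j\<in>UNIV. 1 / (u - xs j)))) (at u)"
    by (rule has_field_derivative_transform_within_open[OF _ open_ball u]) (use H_sq[OF i] in auto)
  have eq: "2 * H i u * D = P u * (\<Sum>j\<in>UNIV. 1 / (u - xs j))" using DERIV_unique[OF 1 2] .
  have nz: "H i u \<noteq> 0" using H_nz[OF i u] .
  have "H i u * (2 * D) = H i u * (H i u * (\<Sum>j\<in>UNIV. 1 / (u - xs j)))"
    using eq H_sq[OF i u] by (simp add: power2_eq_square algebra_simps)
  then have "2 * D = H i u * (\<Sum>j\<in>UNIV. 1 / (u - xs j))" using nz by simp
  then have "D = H i u / 2 * (\<Sum>j\<in>UNIV. 1 / (u - xs j))" by (simp add: field_simps)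
  then show ?thesis using hD by (simp only:)
qed

lemma V_deriv:
  assumes i: "i < NN" and t: "t \<in> {tt i<..<tt (Suc i)}" "t \<notin> SG"
  shows "(V has_vector_derivative (vector_derivative gam (at t) * (V t / 2 * (\<Sum>j\<in>UNIV. 1 / (gam t - xs j))))) (at t)"
proof -
  have t1: "t \<in> {0..1}" using t piece_sub[OF i] by auto
  have gb: "gam t \<in> ball (cc i) (dlt/2)" using inB[OF i] t by auto
  have "((H i \<circ> gam) has_vector_derivative (vector_derivative gam (at t) * (H i (gam t) / 2 * (\<Sum>j\<in>UNIV. 1 / (gam t - xs j))))) (at t)"
    by (rule field_vector_diff_chain_at[OF SG(2)[OF t1 t(2)] H_deriv[OF i gb]])
  then have "(V has_vector_derivative (vector_derivative gam (at t) * (H i (gam t) / 2 * (\<Sum>j\<in>UNIV. 1 / (gam t - xs j))))) (at t)"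
    by (rule has_vector_derivative_transform_within_open[of _ _ _ "{tt i<..<tt (Suc i)}"])
       (use t V_eq_H[OF i] in auto)
  then show ?thesis using V_eq_H[OF i, of t] t by auto
qed

lemma find_piece:
  assumes t: "t \<in> {0<..<1}" "t \<notin> tt ` {..NN}"
  shows "\<exists>i<NN. t \<in> {tt i<..<tt (Suc i)}"
proof -
  define i where "i = nat \<lfloor>t * real NN\<rfloor>"
  have N0: "real NN > 0" using NN(1) by simp
  have fl0: "0 \<le> \<lfloor>t * real NN\<rfloor>" using t N0 by auto
  have ri: "real i = of_int \<lfloor>t * real NN\<rfloor>" unfolding i_def using fl0 by simp
  have le: "real i \<le> t * real NN" "t * real NN < real i + 1" using ri by linarith+
  have ne: "real i \<noteq> t * real NN"
  proof
    assume "real i = t * real NN"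
    then have "t = tt i" unfolding tt_def using N0 by (simp add: field_simps)
    moreover have "i \<le> NN"
    proof -
      have "t * real NN < real NN" using t N0 by auto
      then show ?thesis using le by linarith
    qed
    ultimately show False using t by auto
  qed
  have iN: "i < NN"
  proof -
    have "t * real NN < real NN" using t N0 by auto
    then have "real i < real NN" using le by linarith
    then show ?thesis by simp
  qed
  have "tt i < t" unfolding tt_def using le ne N0 by (simp add: divide_less_eq)
  moreover have "t < tt (Suc i)" unfolding tt_def using le N0 by (simp add: less_divide_eq)
  ultimately show ?thesis using iN by auto
qed

lemma exact:
  assumes phi: "\<forall>u\<in>SS. (\<phi> has_field_derivative \<phi>' u) (at u)"
  shows "(FF (\<lambda>u. of_int n / 2 * (\<Sum>j\<in>UNIV. 1 / (u - xs j)) * \<phi> u + \<phi>' u) has_integral 0) {0..1}"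
proof -
  define F where "F t = V t powi n * \<phi> (gam t)" for t
  have "(FF (\<lambda>u. of_int n / 2 * (\<Sum>j\<in>UNIV. 1 / (u - xs j)) * \<phi> u + \<phi>' u) has_integral (F 1 - F 0)) {0..1}"
  proof (rule fundamental_theorem_of_calculus_interior_strong[where S="SG \<union> tt ` {..NN}"])
    show "finite (SG \<union> tt ` {..NN})" using SG by simp
    show "(0::real) \<le> 1" by simp
    show "continuous_on {0..1} F" unfolding F_def
    proof (intro continuous_intros)
      show "continuous_on {0..1} V" by (rule Vcont)
      show "0 \<le> n \<or> (\<forall>x\<in>{0..1}. V x \<noteq> 0)" using V_nz by auto
      have "continuous_on SS \<phi>"
        using phi by (meson DERIV_isCont continuous_at_imp_continuous_on)
      then show "continuous_on {0..1} (\<lambda>x. \<phi> (gam x))"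
        using gam_cont gam_in_SS by (intro continuous_on_compose2[of SS \<phi> _ gam]) auto
    qed
    fix t assume t: "t \<in> {0<..<1} - (SG \<union> tt ` {..NN})"
    then obtain i where i: "i < NN" "t \<in> {tt i<..<tt (Suc i)}" using find_piece by blast
    have t1: "t \<in> {0..1}" "t \<notin> SG" using t by auto
    let ?g = "vector_derivative gam (at t)"
    let ?S = "(\<Sum>j\<in>UNIV. 1 / (gam t - xs j))"
    have Vd: "(V has_vector_derivative (?g * (V t / 2 * ?S))) (at t)" using V_deriv[OF i t1(2)] .
    have pw: "((\<lambda>w. w powi n) has_field_derivative (of_int n * V t powi (n - 1))) (at (V t))"
      using DERIV_power_int[OF DERIV_ident, of n "V t" UNIV] V_nz[OF t1(1)] by simp
    have d1: "((\<lambda>s. V s powi n) has_vector_derivative (?g * (V t / 2 * ?S) * (of_int n * V t powi (n - 1)))) (at t)"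
      using field_vector_diff_chain_at[OF Vd pw] by (simp add: o_def)
    have d2: "((\<lambda>s. \<phi> (gam s)) has_vector_derivative (?g * \<phi>' (gam t))) (at t)"
      using field_vector_diff_chain_at[OF SG(2)[OF t1] phi[rule_format, OF gam_in_SS[OF t1(1)]]] by (simp add: o_def)
    have d: "(F has_vector_derivative (V t powi n * (?g * \<phi>' (gam t)) + ?g * (V t / 2 * ?S) * (of_int n * V t powi (n - 1)) * \<phi> (gam t))) (at t)"
      unfolding F_def using has_vector_derivative_mult[OF d1 d2] .
    have e: "V t powi (n - 1) * V t = V t powi n" by (rule power_int_minus_mult) (use V_nz[OF t1(1)] in auto)
    have "V t powi n * (?g * \<phi>' (gam t)) + ?g * (V t / 2 * ?S) * (of_int n * V t powi (n - 1)) * \<phi> (gam t)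
        = V t powi n * (?g * \<phi>' (gam t)) + ?g * (of_int n / 2 * ?S) * (V t powi (n - 1) * V t) * \<phi> (gam t)"
      by (simp add: algebra_simps)
    also have "\<dots> = FF (\<lambda>u. of_int n / 2 * (\<Sum>j\<in>UNIV. 1 / (u - xs j)) * \<phi> u + \<phi>' u) t"
      unfolding e FF_def by (simp add: algebra_simps)
    finally show "(F has_vector_derivative FF (\<lambda>u. of_int n / 2 * (\<Sum>j\<in>UNIV. 1 / (u - xs j)) * \<phi> u + \<phi>' u) t) (at t)"
      using d by simp
  qed
  moreover have "F 1 = F 0" unfolding F_def using cl Vcl by simp
  ultimately show ?thesis by simp
qed

end


context hyp begin

definition L where "L \<psi> = integral {0..1} (FF \<psi>)"

lemma L_cong: "(\<And>u. u \<in> SS \<Longrightarrow> f u = g u) \<Longrightarrow> L f = L g"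
  unfolding L_def FF_def by (rule integral_cong) (use gam_in_SS in auto)

lemma L_add: "f holomorphic_on SS \<Longrightarrow> g holomorphic_on SS \<Longrightarrow> L (\<lambda>u. f u + g u) = L f + L g"
proof -
  assume f: "f holomorphic_on SS" and g: "g holomorphic_on SS"
  have "FF (\<lambda>u. f u + g u) = (\<lambda>t. FF f t + FF g t)" by (auto simp: FF_def algebra_simps)
  then show ?thesis unfolding L_def using integral_add[OF FF_int[OF f] FF_int[OF g]] by simp
qed

lemma L_diff: "f holomorphic_on SS \<Longrightarrow> g holomorphic_on SS \<Longrightarrow> L (\<lambda>u. f u - g u) = L f - L g"
proof -
  assume f: "f holomorphic_on SS" and g: "g holomorphic_on SS"
  have "FF (\<lambda>u. f u - g u) = (\<lambda>t. FF f t - FF g t)" by (auto simp: FF_def algebra_simps)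
  then show ?thesis unfolding L_def using integral_diff[OF FF_int[OF f] FF_int[OF g]] by simp
qed

lemma L_cmul: "L (\<lambda>u. c * f u) = c * L f"
proof -
  have "FF (\<lambda>u. c * f u) = (\<lambda>t. c * FF f t)" by (auto simp: FF_def algebra_simps)
  then show ?thesis unfolding L_def by simp
qed

lemma L_sum: "(\<And>a. a \<in> A \<Longrightarrow> f a holomorphic_on SS) \<Longrightarrow> finite A \<Longrightarrow> L (\<lambda>u. \<Sum>a\<in>A. f a u) = (\<Sum>a\<in>A. L (f a))"
proof -
  assume f: "\<And>a. a \<in> A \<Longrightarrow> f a holomorphic_on SS" and A: "finite A"
  have "FF (\<lambda>u. \<Sum>a\<in>A. f a u) = (\<lambda>t. \<Sum>a\<in>A. FF (f a) t)"
    by (auto simp: FF_def sum_distrib_left sum_distrib_right)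
  then show ?thesis unfolding L_def using integral_sum[OF A FF_int[OF f]] by simp
qed

lemma SS_far: "u \<in> SS \<Longrightarrow> dlt/2 < norm (u - xs j)"
  unfolding SS_def by auto

lemma hol_inv: "(\<lambda>u. 1 / (u - xs j)) holomorphic_on SS"
  using SS_ne by (auto intro!: holomorphic_intros)

lemma hyp_eq: "hyp_integral n gam V y = L (\<lambda>u. 1 / (u - y))"
  unfolding hyp_integral_def L_def FF_def by (rule integral_cong) simp

end

definition phi :: "int \<Rightarrow> complex \<Rightarrow> complex" where "phi n w = csqrt (1 - w) powi n"

lemma phi_holo: "phi n holomorphic_on ball 0 1"
proof -
  have "(\<lambda>w. csqrt (1 - w)) holomorphic_on ball 0 1"
    by (rule holomorphic_on_csqrt') (auto intro!: holomorphic_intros not_nonpos_if_near1)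
  moreover have "csqrt (1 - w) \<noteq> 0" if "w \<in> ball 0 1" for w using that by auto
  ultimately show ?thesis unfolding phi_def by (auto intro!: holomorphic_intros)
qed

lemma phi0: "phi n 0 = 1" by (simp add: phi_def)

lemma phi_deriv0: "(phi n has_field_derivative (- (of_int n / 2))) (at 0)"
proof -
  have g: "((\<lambda>w. 1 - w) has_field_derivative -1) (at (0::complex))" by (auto intro!: derivative_eq_intros)
  have c: "(csqrt has_field_derivative inverse (2 * csqrt 1)) (at ((\<lambda>w. 1 - w) (0::complex)))"
    using has_field_derivative_csqrt[of 1] by simp
  have "((\<lambda>w. csqrt (1 - w)) has_field_derivative (inverse (2 * csqrt 1) * -1)) (at 0)"
    using DERIV_chain2[OF c g] by simp
  then have "((\<lambda>w. csqrt (1 - w) powi n) has_field_derivative (of_int n * csqrt (1 - 0) powi (n - 1) * (inverse (2 * csqrt 1) * -1))) (at 0)"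
    by (rule DERIV_power_int) simp
  then show ?thesis unfolding phi_def by simp
qed

lemma eps_small: "\<eta> > 0 \<Longrightarrow> \<exists>\<rho>>0. \<forall>w. w \<noteq> 0 \<and> norm w < \<rho> \<longrightarrow> norm ((phi n w - 1) / w + of_int n / 2) < \<eta>"
proof -
  assume eta: "\<eta> > 0"
  have "((\<lambda>w. (phi n w - phi n 0) / (w - 0)) \<longlongrightarrow> - (of_int n / 2)) (at 0)"
    using phi_deriv0 has_field_derivative_iff by blast
  then obtain s where "s > 0" "\<forall>x. x \<noteq> 0 \<and> norm (x - 0) < s \<longrightarrow> norm ((phi n x - phi n 0) / (x - 0) - - (of_int n / 2)) < \<eta>"
    using eta unfolding LIM_eq by blast
  then show ?thesis by (intro exI[of _ s]) (auto simp: phi0)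
qed


lemma pf: fixes a b d m :: complex
  assumes "a \<noteq> 0" "b \<noteq> 0" "d \<noteq> 0" "a - b = d"
  shows "-m / (b * a) = m/d * (1/a) - m/d*(1/b)"
proof -
  have "m/d * (1/a) - m/d*(1/b) = m/d * (1/a - 1/b)" by (simp add: right_diff_distrib)
  also have "1/a - 1/b = (b - a)/(a*b)" using assms(1,2) by (simp add: diff_frac_eq)
  also have "b - a = -d" using assms(4) by (metis minus_diff_eq)
  finally show ?thesis using assms(3) by (simp add: mult.commute)
qed


lemma id_off: fixes a b d p m :: complex
  assumes "a \<noteq> 0" "b \<noteq> 0" "d \<noteq> 0"
  shows "(1/d)*(p/b) - (1/d)*(1/b) - (-m/(a*b)) = ((p - 1)/(d/a) + m) * (1/(a*b))"
  using assms by (simp add: field_simps)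

lemma id_diag: fixes a e d p m :: complex
  assumes a: "a \<noteq> 0" and e: "e \<noteq> 0" and d: "d \<noteq> 0" and ed: "e = a - d"
  shows "(1/d)*(p/e) - (1/d)*(1/a) - (1 - m)*(1/a^2) = (1 - m)*d*(1/(e*a^2)) + ((p-1)/(d/a) + m)*(1/(e*a))"
proof -
  have s1: "(1/d)*(p/e) - (1/d)*(1/a) = (p*a - e)/(d*e*a)" using a e d by (simp add: field_simps)
  have s2: "p*a - e = (p-1)*a + d" using ed by (simp add: algebra_simps)
  have s3: "((p-1)*a + d)/(d*e*a) = ((p-1)/(d/a)) * (1/(e*a)) + 1/(e*a)" using a e d by (simp add: field_simps)
  have s4: "1/(e*a) - 1/a^2 = d * (1/(e*a^2))"
  proof -
    have "1/(e*a) - 1/a^2 = (a - e) * (1/(e*a^2))" using a e by (simp add: field_simps power2_eq_square)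
    also have "a - e = d" using ed by simp
    finally show ?thesis .
  qed
  have "(1 - m)*d*(1/(e*a^2)) = (1 - m) * (1/(e*a) - 1/a^2)" using s4 by simp
  then show ?thesis unfolding s1 s2 s3 by algebra
qed

context hyp begin

lemma w_small: assumes u: "u \<in> SS" and z: "norm (z - xs k) < dlt/4" shows "norm ((z - xs k)/(u - xs k)) < 1"
proof -
  have "dlt/2 < norm (u - xs k)" using SS_far u by blast
  then have "norm (z - xs k) < norm (u - xs k)" using z dlt_pos by linarith
  then show ?thesis by (simp add: norm_divide divide_less_eq)
qed

lemma phi_comp_holo: assumes z: "norm (z - xs k) < dlt/4"
  shows "(\<lambda>u. phi n ((z - xs k)/(u - xs k))) holomorphic_on SS"
proof -
  have f: "(\<lambda>u. (z - xs k)/(u - xs k)) holomorphic_on SS" using SS_ne by (auto intro!: holomorphic_intros)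
  have "(phi n \<circ> (\<lambda>u. (z - xs k)/(u - xs k))) holomorphic_on SS"
    by (rule holomorphic_on_compose_gen[OF f phi_holo]) (use w_small z in auto)
  then show ?thesis by (simp add: o_def)
qed

lemma perturbed_eq:
  "hyp_integral n gam (\<lambda>t. V t * csqrt (1 - (z - xs k)/(gam t - xs k))) y = L (\<lambda>u. phi n ((z - xs k)/(u - xs k)) / (u - y))"
  unfolding hyp_integral_def L_def FF_def phi_def by (rule integral_cong) (simp add: power_int_mult_distrib)

lemma hol_cinv: "(\<lambda>u. c * (1 / (u - xs j))) holomorphic_on SS"
  by (rule holomorphic_on_mult[OF holomorphic_on_const hol_inv])

lemma inv_bound:
  assumes "u \<in> SS" shows "norm (1 / ((u - xs k) * (u - xs j))) \<le> 1 / ((dlt/2) * (dlt/2))"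
proof -
  have a: "dlt/2 < norm (u - xs k)" "dlt/2 < norm (u - xs j)" using SS_far assms by blast+
  have "(dlt/2) * (dlt/2) \<le> norm (u - xs k) * norm (u - xs j)"
    using a dlt_pos by (intro mult_mono) auto
  then have "1 / (norm (u - xs k) * norm (u - xs j)) \<le> 1 / ((dlt/2) * (dlt/2))"
    using dlt_pos by (intro frac_le) auto
  then show ?thesis by (simp add: norm_divide norm_mult)
qed

lemma deriv_off:
  assumes jk: "xs j \<noteq> xs k"
  shows "((\<lambda>z. L (\<lambda>u. phi n ((z - xs k)/(u - xs k)) / (u - xs j))) has_field_derivative
          (of_int n / 2 * (L (\<lambda>u. 1/(u - xs j)) - L (\<lambda>u. 1/(u - xs k))) / (xs k - xs j))) (at (xs k))"
proof -
  define z0 where "z0 = xs k"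
  define \<Phi> where "\<Phi> z = L (\<lambda>u. phi n ((z - z0)/(u - z0)) / (u - xs j))" for z
  define E where "E u = -(of_int n/2) / ((u - z0) * (u - xs j))" for u
  have Eh: "E holomorphic_on SS" unfolding E_def z0_def using SS_ne by (auto intro!: holomorphic_intros)
  have ne: "z0 - xs j \<noteq> 0" using jk z0_def by auto
  have DE: "of_int n / 2 * (L (\<lambda>u. 1/(u - xs j)) - L (\<lambda>u. 1/(u - xs k))) / (xs k - xs j) = L E"
  proof -
    have "L E = L (\<lambda>u. (of_int n / 2 / (z0 - xs j)) * (1/(u - xs j)) - (of_int n / 2 / (z0 - xs j)) * (1/(u - xs k)))"
    proof (rule L_cong)
      fix u assume u: "u \<in> SS"
      have "u - xs j \<noteq> 0" "u - xs k \<noteq> 0" using SS_ne[OF u] by auto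
      moreover have "(u - xs j) - (u - xs k) = z0 - xs j" unfolding z0_def by simp
      ultimately show "E u = (of_int n / 2 / (z0 - xs j)) * (1/(u - xs j)) - (of_int n / 2 / (z0 - xs j)) * (1/(u - xs k))"
        unfolding E_def using pf[of "u - xs j" "u - xs k" "z0 - xs j" "of_int n / 2"] ne z0_def by simp
    qed
    also have "\<dots> = (of_int n / 2 / (z0 - xs j)) * L (\<lambda>u. 1/(u - xs j)) - (of_int n / 2 / (z0 - xs j)) * L (\<lambda>u. 1/(u - xs k))"
      by (simp only: L_diff[OF hol_cinv hol_cinv] L_cmul)
    finally have LE: "L E = (of_int n / 2 / (z0 - xs j)) * L (\<lambda>u. 1/(u - xs j)) - (of_int n / 2 / (z0 - xs j)) * L (\<lambda>u. 1/(u - xs k))" .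
    have gen: "\<And>x a b d. (x::complex) * (a - b) / d = x / d * a - x / d * b" by (simp add: divide_inverse algebra_simps)
    show ?thesis unfolding LE gen z0_def ..
  qed
  have "(\<Phi> has_field_derivative L E) (at z0)"
    unfolding has_field_derivative_iff LIM_eq
  proof (intro allI impI)
    fix r :: real assume r: "r > 0"
    define K where "K = 1 / ((dlt/2) * (dlt/2))"
    have K: "K > 0" using dlt_pos K_def by simp
    define \<eta> where "\<eta> = r / (2 * (CC + 1) * K)"
    have \<eta>: "\<eta> > 0" using r K CC_nonneg by (simp add: \<eta>_def)
    obtain \<rho> where \<rho>: "\<rho> > 0" "\<forall>w. w \<noteq> 0 \<and> norm w < \<rho> \<longrightarrow> norm ((phi n w - 1)/w + of_int n/2) < \<eta>"
      using eps_small[OF \<eta>] by blast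
    define s where "s = min (dlt/4) (\<rho> * (dlt/2))"
    have s: "s > 0" using dlt_pos \<rho> by (simp add: s_def)
    show "\<exists>s>0. \<forall>z. z \<noteq> z0 \<and> norm (z - z0) < s \<longrightarrow> norm ((\<Phi> z - \<Phi> z0)/(z - z0) - L E) < r"
    proof (intro exI[of _ s] conjI allI impI s)
      fix z assume z: "z \<noteq> z0 \<and> norm (z - z0) < s"
      have zd: "norm (z - xs k) < dlt/4" using z s_def z0_def by auto
      define c where "c = 1/(z - z0)"
      define A where "A u = phi n ((z - z0)/(u - z0)) / (u - xs j)" for u
      define B where "B u = 1/(u - xs j)" for u
      have Ah: "A holomorphic_on SS" unfolding A_def z0_def
        using phi_comp_holo[OF zd] SS_ne by (auto intro!: holomorphic_intros)
      have Bh: "B holomorphic_on SS" unfolding B_def by (rule hol_inv)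
      have cAh: "(\<lambda>u. c * A u) holomorphic_on SS" by (rule holomorphic_on_mult[OF holomorphic_on_const Ah])
      have cBh: "(\<lambda>u. c * B u) holomorphic_on SS" by (rule holomorphic_on_mult[OF holomorphic_on_const Bh])
      have \<Phi>z: "\<Phi> z = L A" unfolding \<Phi>_def A_def by simp
      have \<Phi>0: "\<Phi> z0 = L B" unfolding \<Phi>_def B_def by (simp add: phi0)
      have hol: "(\<lambda>u. (c * A u - c * B u) - E u) holomorphic_on SS"
        using cAh cBh Eh Ah Bh by (intro holomorphic_intros)
      have eq: "L (\<lambda>u. (c * A u - c * B u) - E u) = (\<Phi> z - \<Phi> z0)/(z - z0) - L E"
        using L_diff[OF holomorphic_on_diff[OF cAh cBh] Eh] L_diff[OF cAh cBh] L_cmul[of c A] L_cmul[of c B]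
        unfolding \<Phi>z \<Phi>0 c_def by (simp add: diff_divide_distrib)
      have bound: "\<forall>u\<in>SS. norm ((c * A u - c * B u) - E u) \<le> \<eta> * K"
      proof
        fix u assume u: "u \<in> SS"
        define w where "w = (z - z0)/(u - z0)"
        have u0: "u - z0 \<noteq> 0" "u - xs j \<noteq> 0" using SS_ne[OF u] z0_def by auto
        have wn: "w \<noteq> 0" using z u0 by (simp add: w_def)
        have far: "dlt/2 < norm (u - z0)" using SS_far u z0_def by blast
        have "norm (z - z0) < \<rho> * (dlt/2)" using z s_def by auto
        also have "\<dots> \<le> \<rho> * norm (u - z0)" using far \<rho> by (intro mult_left_mono) auto
        finally have "norm w < \<rho>" unfolding w_def using u0 by (simp add: norm_divide divide_less_eq)
        then have epsb: "norm ((phi n w - 1)/w + of_int n/2) < \<eta>" using \<rho> wn by blast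
        have "(c * A u - c * B u) - E u = ((phi n w - 1)/w + of_int n/2) * (1/((u - z0)*(u - xs j)))"
          unfolding c_def A_def B_def E_def w_def
          using id_off[of "u - z0" "u - xs j" "z - z0" "phi n ((z - z0)/(u - z0))" "of_int n / 2"] z u0 by simp
        also have "norm \<dots> \<le> \<eta> * K"
          unfolding norm_mult K_def using epsb inv_bound[OF u, of k j] z0_def less_imp_le[OF \<eta>]
          by (intro mult_mono) auto
        finally show "norm ((c * A u - c * B u) - E u) \<le> \<eta> * K" .
      qed
      have "norm ((\<Phi> z - \<Phi> z0)/(z - z0) - L E) \<le> CC * (\<eta> * K)"
        using FF_bound[OF hol bound] eq unfolding L_def by simp
      also have "CC * (\<eta> * K) = CC / (CC + 1) * (r / 2)"
      proof -
        have c1: "CC + 1 \<noteq> 0" using CC_nonneg by linarith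
        have e1: "\<eta> * K = r / (2*(CC+1))" unfolding \<eta>_def using K by simp
        show ?thesis unfolding e1 using c1 by (simp add: field_simps)
      qed
      also have "\<dots> < r"
      proof -
        have "CC / (CC + 1) < 1" using CC_nonneg by simp
        then have "CC / (CC + 1) * (r / 2) < 1 * (r / 2)" using r by (intro mult_strict_right_mono) auto
        then show ?thesis using r by linarith
      qed
      finally show "norm ((\<Phi> z - \<Phi> z0)/(z - z0) - L E) < r" .
    qed
  qed
  then show ?thesis unfolding \<Phi>_def z0_def DE by simp
qed

end


context hyp begin

lemma deriv_diag:
  "((\<lambda>z. L (\<lambda>u. phi n ((z - xs k)/(u - xs k)) / (u - z))) has_field_derivative
     ((1 - of_int n/2) * L (\<lambda>u. 1/(u - xs k)^2))) (at (xs k))"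
proof -
  define z0 where "z0 = xs k"
  define m where "m = (of_int n / 2 :: complex)"
  define \<Phi> where "\<Phi> z = L (\<lambda>u. phi n ((z - z0)/(u - z0)) / (u - z))" for z
  define E where "E u = (1 - m) * (1/(u - z0)^2)" for u
  have Eh: "E holomorphic_on SS" unfolding E_def z0_def using SS_ne by (auto intro!: holomorphic_intros)
  have LE: "L E = (1 - m) * L (\<lambda>u. 1/(u - z0)^2)" unfolding E_def by (rule L_cmul)
  have "(\<Phi> has_field_derivative L E) (at z0)"
    unfolding has_field_derivative_iff LIM_eq
  proof (intro allI impI)
    fix r :: real assume r: "r > 0"
    define K1 where "K1 = 1/((dlt/4)*((dlt/2)*(dlt/2)))"
    define K2 where "K2 = 1/((dlt/4)*(dlt/2))"
    have K1: "K1 > 0" and K2: "K2 > 0" using dlt_pos K1_def K2_def by simp_all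
    define am where "am = norm (1 - m)"
    have am: "am \<ge> 0" unfolding am_def by simp
    define \<eta> where "\<eta> = r / (4 * (CC + 1) * K2)"
    have \<eta>: "\<eta> > 0" using r K2 CC_nonneg by (simp add: \<eta>_def)
    obtain \<rho> where \<rho>: "\<rho> > 0" "\<forall>w. w \<noteq> 0 \<and> norm w < \<rho> \<longrightarrow> norm ((phi n w - 1)/w + of_int n/2) < \<eta>"
      using eps_small[OF \<eta>] by blast
    define s3 where "s3 = (r / (4 * (CC + 1))) / ((am + 1) * K1)"
    have s3: "s3 > 0" unfolding s3_def using r CC_nonneg am K1 by (intro divide_pos_pos mult_pos_pos) auto
    define s where "s = min (min (dlt/4) (\<rho> * (dlt/2))) s3"
    have s: "s > 0" using dlt_pos \<rho> s3 by (simp add: s_def)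
    show "\<exists>s>0. \<forall>z. z \<noteq> z0 \<and> norm (z - z0) < s \<longrightarrow> norm ((\<Phi> z - \<Phi> z0)/(z - z0) - L E) < r"
    proof (intro exI[of _ s] conjI allI impI s)
      fix z assume z: "z \<noteq> z0 \<and> norm (z - z0) < s"
      have zd: "norm (z - xs k) < dlt/4" using z s_def z0_def by auto
      define c where "c = 1/(z - z0)"
      define A where "A u = phi n ((z - z0)/(u - z0)) / (u - z)" for u
      define B where "B u = 1/(u - z0)" for u
      have far: "dlt/2 < norm (u - z0)" if "u \<in> SS" for u using SS_far that z0_def by blast
      have farz: "dlt/4 < norm (u - z)" if "u \<in> SS" for u
      proof -
        have "norm (u - z0) \<le> norm (u - z) + norm (z - z0)"
          using norm_triangle_ineq[of "u - z" "z - z0"] by simp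
        moreover have "norm (z - z0) < dlt/4" using zd z0_def by simp
        ultimately show ?thesis using far[OF that] by linarith
      qed
      have Ah: "A holomorphic_on SS" unfolding A_def z0_def
      proof (intro holomorphic_intros phi_comp_holo[OF zd])
        fix u assume "u \<in> SS" then show "u - z \<noteq> 0" using farz dlt_pos by force
      qed
      have Bh: "B holomorphic_on SS" unfolding B_def z0_def by (rule hol_inv)
      have cAh: "(\<lambda>u. c * A u) holomorphic_on SS" by (rule holomorphic_on_mult[OF holomorphic_on_const Ah])
      have cBh: "(\<lambda>u. c * B u) holomorphic_on SS" by (rule holomorphic_on_mult[OF holomorphic_on_const Bh])
      have \<Phi>z: "\<Phi> z = L A" unfolding \<Phi>_def A_def by simp
      have \<Phi>0: "\<Phi> z0 = L B" unfolding \<Phi>_def B_def by (simp add: phi0)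
      have hol: "(\<lambda>u. (c * A u - c * B u) - E u) holomorphic_on SS"
        using cAh cBh Eh Ah Bh by (intro holomorphic_intros)
      have eq: "L (\<lambda>u. (c * A u - c * B u) - E u) = (\<Phi> z - \<Phi> z0)/(z - z0) - L E"
        using L_diff[OF holomorphic_on_diff[OF cAh cBh] Eh] L_diff[OF cAh cBh] L_cmul[of c A] L_cmul[of c B]
        unfolding \<Phi>z \<Phi>0 c_def by (simp add: diff_divide_distrib)
      have bound: "\<forall>u\<in>SS. norm ((c * A u - c * B u) - E u) \<le> am * norm (z - z0) * K1 + \<eta> * K2"
      proof
        fix u assume u: "u \<in> SS"
        define w where "w = (z - z0)/(u - z0)"
        have fa: "dlt/2 < norm (u - z0)" using far[OF u] .
        have fz: "dlt/4 < norm (u - z)" using farz[OF u] .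
        have u0: "u - z0 \<noteq> 0" "u - z \<noteq> 0" using fa fz dlt_pos by auto
        have wn: "w \<noteq> 0" using z u0 by (simp add: w_def)
        have "norm (z - z0) < \<rho> * (dlt/2)" using z s_def by auto
        also have "\<dots> \<le> \<rho> * norm (u - z0)" using fa \<rho> by (intro mult_left_mono) auto
        finally have "norm w < \<rho>" unfolding w_def using u0 by (simp add: norm_divide divide_less_eq)
        then have epsb: "norm ((phi n w - 1)/w + m) < \<eta>" using \<rho> wn m_def by blast
        have "(c * A u - c * B u) - E u = (1 - m)*(z - z0)*(1/((u - z)*(u - z0)^2)) + ((phi n w - 1)/w + m)*(1/((u - z)*(u - z0)))"
          unfolding c_def A_def B_def E_def w_def
          by (rule id_diag) (use z u0 in auto)
        also have "norm \<dots> \<le> norm ((1 - m)*(z - z0)*(1/((u - z)*(u - z0)^2))) + norm (((phi n w - 1)/w + m)*(1/((u - z)*(u - z0))))"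
          by (rule norm_triangle_ineq)
        also have "\<dots> \<le> am * norm (z - z0) * K1 + \<eta> * K2"
        proof (rule add_mono)
          have "(dlt/4)*((dlt/2)*(dlt/2)) \<le> norm (u - z) * (norm (u - z0) * norm (u - z0))"
            using fa fz dlt_pos by (intro mult_mono) auto
          then have "1 / (norm (u - z) * (norm (u - z0) * norm (u - z0))) \<le> K1"
            unfolding K1_def using dlt_pos by (intro frac_le) auto
          then have "norm (1/((u - z)*(u - z0)^2)) \<le> K1" by (simp add: norm_divide norm_mult power2_eq_square)
          then show "norm ((1 - m)*(z - z0)*(1/((u - z)*(u - z0)^2))) \<le> am * norm (z - z0) * K1"
            unfolding norm_mult am_def by (intro mult_left_mono) auto
          have "(dlt/4)*(dlt/2) \<le> norm (u - z) * norm (u - z0)"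
            using fa fz dlt_pos by (intro mult_mono) auto
          then have "1 / (norm (u - z) * norm (u - z0)) \<le> K2"
            unfolding K2_def using dlt_pos by (intro frac_le) auto
          then have "norm (1/((u - z)*(u - z0))) \<le> K2" by (simp add: norm_divide norm_mult)
          then show "norm (((phi n w - 1)/w + m)*(1/((u - z)*(u - z0)))) \<le> \<eta> * K2"
            unfolding norm_mult using epsb \<eta> by (intro mult_mono) auto
        qed
        finally show "norm ((c * A u - c * B u) - E u) \<le> am * norm (z - z0) * K1 + \<eta> * K2" .
      qed
      have "norm ((\<Phi> z - \<Phi> z0)/(z - z0) - L E) \<le> CC * (am * norm (z - z0) * K1 + \<eta> * K2)"
        using FF_bound[OF hol bound] eq unfolding L_def by simp
      also have "\<dots> \<le> CC * (r / (4 * (CC + 1)) + r / (4 * (CC + 1)))"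
      proof (rule mult_left_mono[OF add_mono CC_nonneg])
        have "am * norm (z - z0) \<le> (am + 1) * s" using z am by (intro mult_mono) auto
        then have "am * norm (z - z0) * K1 \<le> (am + 1) * s * K1" using K1 by (intro mult_right_mono) auto
        also have "(am + 1) * s * K1 = s * ((am + 1) * K1)" by simp
        also have "\<dots> \<le> r / (4 * (CC + 1))"
        proof -
          have "s \<le> s3" unfolding s_def by simp
          then have "s \<le> (r / (4 * (CC + 1))) / ((am + 1) * K1)" unfolding s3_def .
          moreover have p: "(am + 1) * K1 > 0" using am K1 by simp
          ultimately show ?thesis using pos_le_divide_eq[OF p] by blast
        qed
        finally show "am * norm (z - z0) * K1 \<le> r / (4 * (CC + 1))" .
        show "\<eta> * K2 \<le> r / (4 * (CC + 1))" unfolding \<eta>_def using K2 by simp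
      qed
      also have "\<dots> = CC / (CC + 1) * (r / 2)"
      proof -
        have a1: "\<And>x y. (x::real)/(4*y) + x/(4*y) = (x/2)/y" by simp
        show ?thesis unfolding a1 by simp
      qed
      also have "\<dots> < r"
      proof -
        have "CC / (CC + 1) < 1" using CC_nonneg by simp
        then have "CC / (CC + 1) * (r / 2) < 1 * (r / 2)" using r by (intro mult_strict_right_mono) auto
        then show ?thesis using r by linarith
      qed
      finally show "norm ((\<Phi> z - \<Phi> z0)/(z - z0) - L E) < r" .
    qed
  qed
  then show ?thesis unfolding \<Phi>_def z0_def LE m_def by simp
qed

end


lemma gid: "(m::complex) * (X + S) * X + - (X*X) = (m - 1) * (X*X) + m * S * X"
  by (simp add: algebra_simps)

context hyp begin

lemma L_zero_of: "(FF \<psi> has_integral 0) {0..1} \<Longrightarrow> L \<psi> = 0"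
  unfolding L_def by (rule integral_unique)

lemma sum_zero: assumes n: "n \<noteq> 0" shows "(\<Sum>l\<in>UNIV. L (\<lambda>u. 1/(u - xs l))) = 0"
proof -
  have d: "\<forall>u\<in>SS. ((\<lambda>u. 1::complex) has_field_derivative 0) (at u)" by auto
  have "L (\<lambda>u. of_int n / 2 * (\<Sum>j\<in>UNIV. 1 / (u - xs j)) * 1 + 0) = 0"
    by (rule L_zero_of[OF exact[OF d]])
  moreover have "L (\<lambda>u. of_int n / 2 * (\<Sum>j\<in>UNIV. 1 / (u - xs j)) * 1 + 0) = of_int n / 2 * (\<Sum>l\<in>UNIV. L (\<lambda>u. 1/(u - xs l)))"
    using L_cmul[of "of_int n / 2" "\<lambda>u. \<Sum>j\<in>UNIV. 1 / (u - xs j)"] L_sum[of UNIV "\<lambda>j u. 1 / (u - xs j)"] hol_inv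
    by simp
  ultimately show ?thesis using n by simp
qed

lemma diag_value:
  assumes inj: "inj xs"
  shows "(1 - of_int n/2) * L (\<lambda>u. 1/(u - xs k)^2) =
         - (\<Sum>l\<in>UNIV-{k}. of_int n / 2 * (L (\<lambda>u. 1/(u - xs l)) - L (\<lambda>u. 1/(u - xs k))) / (xs k - xs l))"
proof -
  define z0 where "z0 = xs k"
  define m where "m = (of_int n / 2 :: complex)"
  define cf where "cf l = (- m) / (z0 - xs l)" for l
  have ne: "z0 - xs l \<noteq> 0" if "l \<noteq> k" for l using inj that unfolding z0_def inj_def by auto
  have d: "\<forall>u\<in>SS. ((\<lambda>u. 1/(u - z0)) has_field_derivative (-(1/(u - z0)^2))) (at u)"
  proof
    fix u assume u: "u \<in> SS"
    have "u - z0 \<noteq> 0" using SS_ne[OF u] z0_def by auto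
    then show "((\<lambda>u. 1/(u - z0)) has_field_derivative (-(1/(u - z0)^2))) (at u)"
      by (auto intro!: derivative_eq_intros simp: power2_eq_square)
  qed
  have Z: "L (\<lambda>u. of_int n / 2 * (\<Sum>j\<in>UNIV. 1 / (u - xs j)) * (1/(u - z0)) + (-(1/(u - z0)^2))) = 0"
    by (rule L_zero_of[OF exact[OF d]])
  have hJ: "(\<lambda>u. 1/(u - z0)^2) holomorphic_on SS" using SS_ne z0_def by (auto intro!: holomorphic_intros)
  have hT: "(\<lambda>u. \<Sum>l\<in>UNIV-{k}. cf l * (1/(u - xs l)) - cf l * (1/(u - xs k))) holomorphic_on SS"
    by (intro holomorphic_on_sum holomorphic_on_diff hol_cinv)
  have P: "L (\<lambda>u. of_int n / 2 * (\<Sum>j\<in>UNIV. 1 / (u - xs j)) * (1/(u - z0)) + (-(1/(u - z0)^2)))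
      = L (\<lambda>u. (m - 1) * (1/(u - z0)^2) + (\<Sum>l\<in>UNIV-{k}. cf l * (1/(u - xs l)) - cf l * (1/(u - xs k))))"
  proof (rule L_cong)
    fix u assume u: "u \<in> SS"
    have a: "u - z0 \<noteq> 0" using SS_ne[OF u] z0_def by auto
    have sr: "(\<Sum>j\<in>UNIV. 1 / (u - xs j)) = 1/(u - z0) + (\<Sum>l\<in>UNIV-{k}. 1 / (u - xs l))"
      unfolding z0_def by (simp add: sum.remove[of UNIV k])
    have t: "m * (1/(u - xs l)) * (1/(u - z0)) = cf l * (1/(u - xs l)) - cf l * (1/(u - xs k))" if l: "l \<in> UNIV-{k}" for l
    proof -
      have b: "u - xs l \<noteq> 0" using SS_ne[OF u] by auto
      have "-(-m) / ((u - z0) * (u - xs l)) = (-m)/(z0 - xs l) * (1/(u - xs l)) - (-m)/(z0 - xs l) * (1/(u - z0))"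
        by (rule pf) (use a b ne l in auto)
      then show ?thesis unfolding cf_def z0_def by (simp add: mult.commute)
    qed
    have "of_int n / 2 * (\<Sum>j\<in>UNIV. 1 / (u - xs j)) * (1/(u - z0)) + (-(1/(u - z0)^2))
        = (m - 1) * (1/(u - z0)^2) + (\<Sum>l\<in>UNIV-{k}. m * (1/(u - xs l)) * (1/(u - z0)))"
    proof -
      have q: "1/(u - z0)^2 = (1/(u-z0))*(1/(u-z0))" by (simp add: power2_eq_square)
      have s2: "(\<Sum>l\<in>UNIV-{k}. m * (1/(u - xs l)) * (1/(u - z0))) = m * (\<Sum>l\<in>UNIV-{k}. 1/(u - xs l)) * (1/(u - z0))"
        by (simp only: sum_distrib_left sum_distrib_right)
      show ?thesis unfolding sr q s2 unfolding m_def by (rule gid)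
    qed
    also have "\<dots> = (m - 1) * (1/(u - z0)^2) + (\<Sum>l\<in>UNIV-{k}. cf l * (1/(u - xs l)) - cf l * (1/(u - xs k)))"
    proof -
      have "(\<Sum>l\<in>UNIV-{k}. m * (1/(u - xs l)) * (1/(u - z0))) = (\<Sum>l\<in>UNIV-{k}. cf l * (1/(u - xs l)) - cf l * (1/(u - xs k)))"
        by (rule sum.cong[OF refl t])
      then show ?thesis by (simp only:)
    qed
    finally show "of_int n / 2 * (\<Sum>j\<in>UNIV. 1 / (u - xs j)) * (1/(u - z0)) + (-(1/(u - z0)^2))
        = (m - 1) * (1/(u - z0)^2) + (\<Sum>l\<in>UNIV-{k}. cf l * (1/(u - xs l)) - cf l * (1/(u - xs k)))" .
  qed
  have "L (\<lambda>u. (m - 1) * (1/(u - z0)^2) + (\<Sum>l\<in>UNIV-{k}. cf l * (1/(u - xs l)) - cf l * (1/(u - xs k))))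
      = (m - 1) * L (\<lambda>u. 1/(u - z0)^2) + (\<Sum>l\<in>UNIV-{k}. cf l * L (\<lambda>u. 1/(u - xs l)) - cf l * L (\<lambda>u. 1/(u - xs k)))"
  proof -
    have s1: "L (\<lambda>u. (m - 1) * (1/(u - z0)^2) + (\<Sum>l\<in>UNIV-{k}. cf l * (1/(u - xs l)) - cf l * (1/(u - xs k))))
       = L (\<lambda>u. (m - 1) * (1/(u - z0)^2)) + L (\<lambda>u. \<Sum>l\<in>UNIV-{k}. cf l * (1/(u - xs l)) - cf l * (1/(u - xs k)))"
      by (rule L_add[OF holomorphic_on_mult[OF holomorphic_on_const hJ] hT])
    have s2: "L (\<lambda>u. (m - 1) * (1/(u - z0)^2)) = (m - 1) * L (\<lambda>u. 1/(u - z0)^2)" by (rule L_cmul)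
    have s3: "L (\<lambda>u. \<Sum>l\<in>UNIV-{k}. cf l * (1/(u - xs l)) - cf l * (1/(u - xs k)))
       = (\<Sum>l\<in>UNIV-{k}. L (\<lambda>u. cf l * (1/(u - xs l)) - cf l * (1/(u - xs k))))"
      by (rule L_sum, rule holomorphic_on_diff[OF hol_cinv hol_cinv], simp)
    have s4: "L (\<lambda>u. cf l * (1/(u - xs l)) - cf l * (1/(u - xs k))) = cf l * L (\<lambda>u. 1/(u - xs l)) - cf l * L (\<lambda>u. 1/(u - xs k))" for l
      by (simp only: L_diff[OF hol_cinv hol_cinv] L_cmul)
    show ?thesis by (simp only: s1 s2 s3 s4)
  qed
  then have E0: "(m - 1) * L (\<lambda>u. 1/(u - z0)^2) + (\<Sum>l\<in>UNIV-{k}. cf l * L (\<lambda>u. 1/(u - xs l)) - cf l * L (\<lambda>u. 1/(u - xs k))) = 0"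
    using Z P by simp
  have "(\<Sum>l\<in>UNIV-{k}. cf l * L (\<lambda>u. 1/(u - xs l)) - cf l * L (\<lambda>u. 1/(u - xs k)))
      = - (\<Sum>l\<in>UNIV-{k}. m * (L (\<lambda>u. 1/(u - xs l)) - L (\<lambda>u. 1/(u - xs k))) / (z0 - xs l))"
    unfolding sum_negf[symmetric] cf_def by (rule sum.cong) (simp_all add: divide_inverse algebra_simps)
  then show ?thesis using E0 unfolding z0_def m_def by (simp add: algebra_simps)
qed

end


lemma schl_12: "schl_mat n a $ 1 $ 2 = a"
  by (simp add: schl_mat_def)

lemma schl_indep: "\<not> (r = 1 \<and> s = 2) \<Longrightarrow> schl_mat n a $ r $ s = schl_mat n b $ r $ s"
  by (auto simp: schl_mat_def)

lemma comm_schl: "commutator (schl_mat n a) (schl_mat n b) $ r $ s = (if r = 1 \<and> s = 2 then of_int n / 2 * (b - a) else 0)"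
  using exhaust_2[of r] exhaust_2[of s]
  by (auto simp: commutator_def schl_mat_def matrix_matrix_mult_def sum_2 field_simps)

lemma msmul_nth: "msmul c M $ r $ s = c * M $ r $ s"
  by (simp add: msmul_def)


lemma vupd_nth: "vupd x k z $ j = (if j = k then z else x $ j)"
  by (simp add: vupd_def)

lemma vupd_same: "vupd x k (x $ k) = x"
  by (simp add: vupd_def vec_eq_iff)

lemma vupd_cont: "continuous_on UNIV (vupd x k)"
proof (unfold vupd_def, rule continuous_on_vec_lambda)
  fix i show "continuous_on UNIV (\<lambda>z. if i = k then z else x $ i)" by (cases "i = k") auto
qed

lemma inst:
  fixes x :: "complex^'m"
  assumes "valid_path \<gamma>" "pathfinish \<gamma> = pathstart \<gamma>" "\<forall>t\<in>{0..1}. \<forall>j. \<gamma> t \<noteq> x $ j"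
    "\<forall>t\<in>{0..1}. (Wx t)^2 = (\<Prod>j\<in>UNIV. \<gamma> t - x $ j)" "continuous_on {0..1} Wx" "Wx 1 = Wx 0"
  shows "hyp \<gamma> Wx (\<lambda>j. x $ j)"
  using assms by unfold_locales (auto simp: pathfinish_def pathstart_def)

lemma rep:
  fixes Wf :: "complex^'m \<Rightarrow> real \<Rightarrow> complex" and U :: "(complex^'m) set" and x :: "complex^'m"
  assumes U: "open U" and x: "x \<in> U"
    and avoid: "\<forall>y\<in>U. \<forall>t\<in>{0..1}. \<forall>j. \<gamma> t \<noteq> y $ j"
    and curve: "\<forall>y\<in>U. \<forall>t\<in>{0..1}. (Wf y t)^2 = (\<Prod>j\<in>UNIV. \<gamma> t - y $ j)"
    and cont: "continuous_on (U \<times> {0..1}) (\<lambda>p. Wf (fst p) (snd p))"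
    and d: "d > 0" "\<forall>t\<in>{0..1}. d \<le> norm (\<gamma> t - x $ k)"
  shows "\<exists>r>0. \<forall>z\<in>ball (x$k) r. vupd x k z \<in> U \<and>
           (\<forall>t\<in>{0..1}. Wf (vupd x k z) t = Wf x t * csqrt (1 - (z - x$k)/(\<gamma> t - x$k)))"
proof -
  have "open (vupd x k -` U)" using open_vimage[OF U vupd_cont] .
  moreover have "x $ k \<in> vupd x k -` U" by (simp only: vimage_eq vupd_same x)
  ultimately obtain r1 where r1: "r1 > 0" "ball (x$k) r1 \<subseteq> vupd x k -` U" using openE by blast
  define r where "r = min r1 (d/2)"
  have r: "r > 0" using r1 d by (simp add: r_def)
  have inU: "vupd x k z \<in> U" if "z \<in> ball (x$k) r" for z using that r1 r_def by auto
  show ?thesis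
  proof (intro exI[of _ r] conjI r ballI inU)
    fix z and t :: real assume z: "z \<in> ball (x$k) r" and t: "t \<in> {0..1}"
    have gk: "\<gamma> t - x $ k \<noteq> 0" using avoid x t by auto
    define rat where "rat z = 1 - (z - x$k)/(\<gamma> t - x$k)" for z
    have ratok: "rat z \<notin> \<real>\<^sub>\<le>\<^sub>0" if "z \<in> ball (x$k) r" for z
    proof (rule not_nonpos_if_near1)
      have "norm (z - x$k) < d/2" using that r_def by (auto simp: dist_norm norm_minus_commute)
      moreover have "d \<le> norm (\<gamma> t - x $ k)" using d t by blast
      ultimately have "norm (z - x$k) < norm (\<gamma> t - x $ k)" using d by linarith
      then show "norm (rat z - 1) < 1" unfolding rat_def by (simp add: norm_divide divide_less_eq)
    qed
    have rnz: "rat z \<noteq> 0" if "z \<in> ball (x$k) r" for z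
      using ratok[OF that] by (metis nonpos_Reals_zero_I)
    have Wx0: "Wf x t \<noteq> 0"
    proof -
      have "(\<Prod>j\<in>UNIV. \<gamma> t - x $ j) \<noteq> 0" using avoid x t by auto
      then show ?thesis using curve x t by (metis power_zero_numeral)
    qed
    define f where "f z = Wf (vupd x k z) t / (Wf x t * csqrt (rat z))" for z
    have "f z = 1"
    proof (rule sign_lemma[of "ball (x$k) r" f "x$k"])
      show "connected (ball (x $ k) r)" by simp
      show "x $ k \<in> ball (x $ k) r" using r by simp
      show "z \<in> ball (x $ k) r" by fact
      have vs: "vupd x k (x $ k) = x" by (rule vupd_same)
      show "f (x $ k) = 1" unfolding f_def rat_def vs using Wx0 by simp
      show "continuous_on (ball (x $ k) r) f" unfolding f_def
      proof (rule continuous_on_divide)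
        have "continuous_on (ball (x $ k) r) (\<lambda>z. (vupd x k z, t))"
          using vupd_cont continuous_on_subset by (intro continuous_intros) blast
        moreover have "(\<lambda>z. (vupd x k z, t)) ` ball (x $ k) r \<subseteq> U \<times> {0..1}" using inU t by auto
        ultimately show "continuous_on (ball (x $ k) r) (\<lambda>z. Wf (vupd x k z) t)"
          using continuous_on_compose2[OF cont, of "ball (x $ k) r" "\<lambda>z. (vupd x k z, t)"] by simp
        have "continuous_on (ball (x $ k) r) (\<lambda>z. csqrt (rat z))"
          unfolding rat_def using ratok[unfolded rat_def] gk
          by (intro continuous_on_compose2[OF continuous_on_csqrt, of _ "\<lambda>z. 1 - (z - x$k)/(\<gamma> t - x$k)"]
              continuous_intros) (auto simp: ComplI)
        then show "continuous_on (ball (x $ k) r) (\<lambda>z. Wf x t * csqrt (rat z))"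
          by (intro continuous_intros)
        show "\<forall>z\<in>ball (x $ k) r. Wf x t * csqrt (rat z) \<noteq> 0"
          using Wx0 rnz by simp
      qed
      fix y assume y: "y \<in> ball (x $ k) r"
      have yU: "vupd x k y \<in> U" using inU[OF y] .
      have p1: "(\<Prod>j\<in>UNIV-{k}. \<gamma> t - vupd x k y $ j) = (\<Prod>j\<in>UNIV-{k}. \<gamma> t - x $ j)"
        by (rule prod.cong) (auto simp: vupd_nth)
      have "(Wf (vupd x k y) t)^2 = (\<Prod>j\<in>UNIV. \<gamma> t - vupd x k y $ j)" using curve yU t by blast
      also have "\<dots> = (\<gamma> t - vupd x k y $ k) * (\<Prod>j\<in>UNIV-{k}. \<gamma> t - vupd x k y $ j)"
        by (simp add: prod.remove[of UNIV k])
      finally have num: "(Wf (vupd x k y) t)^2 = (\<gamma> t - y) * (\<Prod>j\<in>UNIV-{k}. \<gamma> t - x $ j)"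
        unfolding p1 by (simp add: vupd_nth)
      have den: "(Wf x t * csqrt (rat y))^2 = (\<gamma> t - y) * (\<Prod>j\<in>UNIV-{k}. \<gamma> t - x $ j)"
      proof -
        have w2: "(Wf x t)^2 = (\<gamma> t - x $ k) * (\<Prod>j\<in>UNIV-{k}. \<gamma> t - x $ j)"
          using curve x t by (simp add: prod.remove[of UNIV k])
        have ry: "rat y = (\<gamma> t - y) / (\<gamma> t - x $ k)" unfolding rat_def using gk by (simp add: field_simps)
        have "(Wf x t * csqrt (rat y))^2 = (Wf x t)^2 * rat y" by (simp add: power_mult_distrib)
        also have "\<dots> = (\<gamma> t - x $ k) * (\<Prod>j\<in>UNIV-{k}. \<gamma> t - x $ j) * ((\<gamma> t - y) / (\<gamma> t - x $ k))"
          unfolding w2 ry ..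
        also have "\<dots> = (\<gamma> t - y) * (\<Prod>j\<in>UNIV-{k}. \<gamma> t - x $ j)" using gk by (simp add: field_simps)
        finally show ?thesis .
      qed
      have dn: "Wf x t * csqrt (rat y) \<noteq> 0" using Wx0 rnz[OF y] by simp
      show "(f y)^2 = 1" unfolding f_def power_divide num den[symmetric] using dn by simp
    qed
    then show "Wf (vupd x k z) t = Wf x t * csqrt (1 - (z - x$k)/(\<gamma> t - x$k))"
      unfolding f_def rat_def using Wx0 ratok[OF z] by (auto simp: complex_nonpos_Reals_iff divide_eq_1_iff rat_def)
  qed
qed


lemma sumid:
  fixes c I1 I2 :: "nat \<Rightarrow> complex"
  assumes "d \<noteq> 0"
  shows "(\<Sum>m<N. c m * (q * (I1 m - I2 m) / d)) = 1 / d * (q * ((\<Sum>m<N. c m * I1 m) - (\<Sum>m<N. c m * I2 m)))"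
proof -
  have "1 / d * (q * ((\<Sum>m<N. c m * I1 m) - (\<Sum>m<N. c m * I2 m))) = (\<Sum>m<N. 1 / d * (q * (c m * I1 m - c m * I2 m)))"
    by (simp only: sum_subtractf[symmetric] sum_distrib_left)
  also have "\<dots> = (\<Sum>m<N. c m * (q * (I1 m - I2 m) / d))"
    by (rule sum.cong) (use assms in \<open>simp_all add: field_simps\<close>)
  finally show ?thesis by simp
qed

definition cyc_ok :: "(complex^'m) set \<Rightarrow> (real \<Rightarrow> complex) \<Rightarrow> (complex^'m \<Rightarrow> real \<Rightarrow> complex) \<Rightarrow> bool" where
  "cyc_ok U \<gamma> Wf \<longleftrightarrow> valid_path \<gamma> \<and> pathfinish \<gamma> = pathstart \<gamma> \<and> (\<forall>y\<in>U. \<forall>t\<in>{0..1}. \<forall>j. \<gamma> t \<noteq> y $ j)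
     \<and> (\<forall>y\<in>U. \<forall>t\<in>{0..1}. (Wf y t)^2 = (\<Prod>j\<in>UNIV. \<gamma> t - y $ j))
     \<and> continuous_on (U \<times> {0..1}) (\<lambda>p. Wf (fst p) (snd p)) \<and> (\<forall>y\<in>U. Wf y 1 = Wf y 0)"

lemma cyc:
  fixes Wf :: "complex^'m \<Rightarrow> real \<Rightarrow> complex" and \<gamma> :: "real \<Rightarrow> complex" and U :: "(complex^'m) set" and x :: "complex^'m"
  assumes U: "open U" and x: "x \<in> U" and injx: "inj (\<lambda>j. x $ j)" and ok: "cyc_ok U \<gamma> Wf"
  shows "j \<noteq> k \<Longrightarrow> ((\<lambda>z. hyp_integral n \<gamma> (Wf (vupd x k z)) (vupd x k z $ j)) has_field_derivative
            (of_int n / 2 * (hyp_integral n \<gamma> (Wf x) (x$j) - hyp_integral n \<gamma> (Wf x) (x$k)) / (x$k - x$j))) (at (x$k))"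
    and "((\<lambda>z. hyp_integral n \<gamma> (Wf (vupd x k z)) (vupd x k z $ k)) has_field_derivative
            (- (\<Sum>l\<in>UNIV-{k}. of_int n / 2 * (hyp_integral n \<gamma> (Wf x) (x$l) - hyp_integral n \<gamma> (Wf x) (x$k)) / (x$k - x$l)))) (at (x$k))"
    and "n \<noteq> 0 \<Longrightarrow> (\<Sum>l\<in>UNIV. hyp_integral n \<gamma> (Wf x) (x$l)) = 0"
proof -
  have vp: "valid_path \<gamma>" and cl: "pathfinish \<gamma> = pathstart \<gamma>"
    and avoid: "\<forall>y\<in>U. \<forall>t\<in>{0..1}. \<forall>j. \<gamma> t \<noteq> y $ j"
    and curve: "\<forall>y\<in>U. \<forall>t\<in>{0..1}. (Wf y t)^2 = (\<Prod>j\<in>UNIV. \<gamma> t - y $ j)"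
    and cont: "continuous_on (U \<times> {0..1}) (\<lambda>p. Wf (fst p) (snd p))"
    and wcl: "\<forall>y\<in>U. Wf y 1 = Wf y 0"
    using ok unfolding cyc_ok_def by auto
  have Vc: "continuous_on {0..1} (Wf x)"
  proof -
    have "continuous_on {0..1} (\<lambda>t. (x, t))" by (intro continuous_intros)
    then show ?thesis using continuous_on_compose2[OF cont, of "{0..1}" "\<lambda>t. (x, t)"] x by auto
  qed
  interpret H: hyp n \<gamma> "Wf x" "\<lambda>j. x $ j"
    by (rule inst) (use vp cl avoid curve Vc wcl x in auto)
  obtain r where r: "r > 0" "\<forall>z\<in>ball (x$k) r. vupd x k z \<in> U \<and> (\<forall>t\<in>{0..1}. Wf (vupd x k z) t = Wf x t * csqrt (1 - (z - x$k)/(\<gamma> t - x$k)))"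
    using rep[OF U x avoid curve cont H.dlt_pos] H.dlt_le by blast
  have E: "hyp_integral n \<gamma> (Wf (vupd x k z)) y = H.L (\<lambda>u. phi n ((z - x$k)/(u - x$k)) / (u - y))" if "z \<in> ball (x$k) r" for z y
  proof -
    have "hyp_integral n \<gamma> (Wf (vupd x k z)) y = hyp_integral n \<gamma> (\<lambda>t. Wf x t * csqrt (1 - (z - x$k)/(\<gamma> t - x$k))) y"
      unfolding hyp_integral_def by (rule integral_cong) (use r that in auto)
    also have "\<dots> = H.L (\<lambda>u. phi n ((z - x$k)/(u - x$k)) / (u - y))" by (rule H.perturbed_eq)
    finally show ?thesis .
  qed
  show "((\<lambda>z. hyp_integral n \<gamma> (Wf (vupd x k z)) (vupd x k z $ j)) has_field_derivative
            (of_int n / 2 * (hyp_integral n \<gamma> (Wf x) (x$j) - hyp_integral n \<gamma> (Wf x) (x$k)) / (x$k - x$j))) (at (x$k))"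
    if jk: "j \<noteq> k"
  proof -
    have ne: "x $ j \<noteq> x $ k" using injx jk unfolding inj_def by blast
    have d: "((\<lambda>z. H.L (\<lambda>u. phi n ((z - x$k)/(u - x$k)) / (u - x$j))) has_field_derivative
            (of_int n / 2 * (hyp_integral n \<gamma> (Wf x) (x$j) - hyp_integral n \<gamma> (Wf x) (x$k)) / (x$k - x$j))) (at (x$k))"
      unfolding H.hyp_eq using H.deriv_off[OF ne] by simp
    show ?thesis
      by (rule has_field_derivative_transform_within_open[OF d open_ball[of "x$k" r]]) (use r E jk in \<open>auto simp: vupd_nth\<close>)
  qed
  show "((\<lambda>z. hyp_integral n \<gamma> (Wf (vupd x k z)) (vupd x k z $ k)) has_field_derivative
            (- (\<Sum>l\<in>UNIV-{k}. of_int n / 2 * (hyp_integral n \<gamma> (Wf x) (x$l) - hyp_integral n \<gamma> (Wf x) (x$k)) / (x$k - x$l)))) (at (x$k))"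
  proof -
    have d: "((\<lambda>z. H.L (\<lambda>u. phi n ((z - x$k)/(u - x$k)) / (u - z))) has_field_derivative
            (- (\<Sum>l\<in>UNIV-{k}. of_int n / 2 * (hyp_integral n \<gamma> (Wf x) (x$l) - hyp_integral n \<gamma> (Wf x) (x$k)) / (x$k - x$l)))) (at (x$k))"
      unfolding H.hyp_eq using H.deriv_diag[of k] H.diag_value[OF injx, of k] by simp
    show ?thesis
      by (rule has_field_derivative_transform_within_open[OF d open_ball[of "x$k" r]]) (use r E in \<open>auto simp: vupd_nth\<close>)
  qed
  show "(\<Sum>l\<in>UNIV. hyp_integral n \<gamma> (Wf x) (x$l)) = 0" if "n \<noteq> 0"
    unfolding H.hyp_eq using H.sum_zero[OF that] by simp
qed


theorem corollary1:
  fixes g :: nat and n :: int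
    and U :: "(complex^'m) set"
    and gam :: "nat \<Rightarrow> real \<Rightarrow> complex"
    and W :: "nat \<Rightarrow> complex^'m \<Rightarrow> real \<Rightarrow> complex"
    and c :: "nat \<Rightarrow> complex"
    and a :: "'m \<Rightarrow> complex^'m \<Rightarrow> complex"
    and A :: "'m \<Rightarrow> complex^'m \<Rightarrow> complex^2^2"
  assumes g: "g \<ge> 1" and n: "n \<noteq> 0"
    and card: "CARD('m) = 2 * g + 1"
    and U: "open U" "connected U"
    and distinct: "\<forall>x\<in>U. inj (\<lambda>j. x $ j)"
    and paths: "\<forall>k<2*g. valid_path (gam k) \<and> pathfinish (gam k) = pathstart (gam k)"
    and avoid: "\<forall>k<2*g. \<forall>x\<in>U. \<forall>t\<in>{0..1}. \<forall>j. gam k t \<noteq> x $ j"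
    and on_curve: "\<forall>k<2*g. \<forall>x\<in>U. \<forall>t\<in>{0..1}. (W k x t)^2 = (\<Prod>j\<in>UNIV. gam k t - x $ j)"
    and lift_cont: "\<forall>k<2*g. continuous_on (U \<times> {0..1}) (\<lambda>p. W k (fst p) (snd p))"
    and lift_closed: "\<forall>k<2*g. \<forall>x\<in>U. W k x 1 = W k x 0"
    and a_def: "\<forall>i x. a i x = (\<Sum>k<2*g. c k * hyp_integral n (gam k) (W k x) (x $ i))"
    and A_def: "\<forall>i x. A i x = schl_mat n (a i x)"
  shows "(\<forall>x\<in>U. \<forall>j k. k \<noteq> j \<longrightarrow>
            mat_has_deriv (\<lambda>z. A j (vupd x k z))
              (msmul (1 / (x $ k - x $ j)) (commutator (A k x) (A j x))) (x $ k))
       \<and> (\<forall>x\<in>U. \<forall>k.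
            mat_has_deriv (\<lambda>z. A k (vupd x k z))
              (- (\<Sum>j\<in>UNIV - {k}. msmul (1 / (x $ k - x $ j)) (commutator (A k x) (A j x)))) (x $ k))
       \<and> (\<forall>x\<in>U. \<forall>y\<in>U. - (\<Sum>i\<in>UNIV. A i x) = - (\<Sum>i\<in>UNIV. A i y))"
proof -
  define I where "I m y i = hyp_integral n (gam m) (W m y) (y $ i)" for m y i
  have aI: "a i y = (\<Sum>m<2*g. c m * I m y i)" for i y using a_def I_def by simp
  have ok: "cyc_ok U (gam m) (W m)" if "m < 2*g" for m
    unfolding cyc_ok_def using that paths avoid on_curve lift_cont lift_closed by blast
  have AA: "A i y = schl_mat n (a i y)" for i y using A_def by simp
  have const_deriv: "((\<lambda>z. A j (vupd x k z) $ r $ s) has_field_derivative 0) (at z0)"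
    if "\<not> (r = 1 \<and> s = 2)" for j x k r s z0
  proof -
    have "(\<lambda>z. A j (vupd x k z) $ r $ s) = (\<lambda>z. schl_mat n 0 $ r $ s)"
      unfolding AA using schl_indep[OF that] by auto
    then show ?thesis by simp
  qed
  have P1: "\<forall>x\<in>U. \<forall>j k. k \<noteq> j \<longrightarrow>
            mat_has_deriv (\<lambda>z. A j (vupd x k z))
              (msmul (1 / (x $ k - x $ j)) (commutator (A k x) (A j x))) (x $ k)"
  proof (intro ballI allI impI)
    fix x and j k :: 'm assume x: "x \<in> U" and kj: "k \<noteq> j"
    have injx: "inj (\<lambda>j. x $ j)" using distinct x by blast
    have ne: "x $ k - x $ j \<noteq> 0" using injx kj unfolding inj_def by auto
    have dA: "((\<lambda>z. a j (vupd x k z)) has_field_derivative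
        (\<Sum>m<2*g. c m * (of_int n / 2 * (I m x j - I m x k) / (x$k - x$j)))) (at (x$k))"
      unfolding aI I_def
      by (intro DERIV_sum DERIV_cmult cyc(1)[OF U(1) x injx ok]) (use kj in auto)
    show "mat_has_deriv (\<lambda>z. A j (vupd x k z))
              (msmul (1 / (x $ k - x $ j)) (commutator (A k x) (A j x))) (x $ k)"
      unfolding mat_has_deriv_def
    proof (intro allI)
      fix r s :: 2
      show "((\<lambda>z. A j (vupd x k z) $ r $ s) has_field_derivative
              msmul (1 / (x $ k - x $ j)) (commutator (A k x) (A j x)) $ r $ s) (at (x $ k))"
      proof (cases "r = 1 \<and> s = 2")
        case True
        have "msmul (1 / (x $ k - x $ j)) (commutator (A k x) (A j x)) $ r $ s
            = 1 / (x $ k - x $ j) * (of_int n / 2 * (a j x - a k x))"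
          using True by (simp add: msmul_nth AA comm_schl)
        also have "\<dots> = (\<Sum>m<2*g. c m * (of_int n / 2 * (I m x j - I m x k) / (x$k - x$j)))"
          unfolding aI by (rule sumid[OF ne, symmetric])
        finally show ?thesis using dA True by (simp add: AA schl_12)
      next
        case False
        have "msmul (1 / (x $ k - x $ j)) (commutator (A k x) (A j x)) $ r $ s = 0"
          unfolding vector_uminus_component sum_component msmul_nth AA comm_schl if_not_P[OF False] by simp
        then show ?thesis using const_deriv[OF False] by simp
      qed
    qed
  qed
  have P2: "\<forall>x\<in>U. \<forall>k.
            mat_has_deriv (\<lambda>z. A k (vupd x k z))
              (- (\<Sum>j\<in>UNIV - {k}. msmul (1 / (x $ k - x $ j)) (commutator (A k x) (A j x)))) (x $ k)"
  proof (intro ballI allI)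
    fix x and k :: 'm assume x: "x \<in> U"
    have injx: "inj (\<lambda>j. x $ j)" using distinct x by blast
    have dA: "((\<lambda>z. a k (vupd x k z)) has_field_derivative
        (\<Sum>m<2*g. c m * (- (\<Sum>l\<in>UNIV-{k}. of_int n / 2 * (I m x l - I m x k) / (x$k - x$l))))) (at (x$k))"
      unfolding aI I_def
      by (intro DERIV_sum DERIV_cmult cyc(2)[OF U(1) x injx ok]) auto
    have val: "(\<Sum>m<2*g. c m * (- (\<Sum>l\<in>UNIV-{k}. of_int n / 2 * (I m x l - I m x k) / (x$k - x$l))))
        = - (\<Sum>l\<in>UNIV-{k}. 1 / (x $ k - x $ l) * (of_int n / 2 * (a l x - a k x)))"
    proof -
      have "(\<Sum>m<2*g. c m * (- (\<Sum>l\<in>UNIV-{k}. of_int n / 2 * (I m x l - I m x k) / (x$k - x$l))))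
          = - (\<Sum>l\<in>UNIV-{k}. \<Sum>m<2*g. c m * (of_int n / 2 * (I m x l - I m x k) / (x$k - x$l)))"
        by (simp add: sum_distrib_left sum_negf sum.swap[of _ "{..<2*g}"])
      also have "\<dots> = - (\<Sum>l\<in>UNIV-{k}. 1 / (x $ k - x $ l) * (of_int n / 2 * (a l x - a k x)))"
      proof -
        have "(\<Sum>m<2*g. c m * (of_int n / 2 * (I m x l - I m x k) / (x$k - x$l)))
            = 1 / (x $ k - x $ l) * (of_int n / 2 * (a l x - a k x))" if l: "l \<in> UNIV-{k}" for l
        proof -
          have ne: "x $ k - x $ l \<noteq> 0" using injx l unfolding inj_def by auto
          show ?thesis unfolding aI by (rule sumid[OF ne])
        qed
        then have "(\<Sum>l\<in>UNIV-{k}. \<Sum>m<2*g. c m * (of_int n / 2 * (I m x l - I m x k) / (x$k - x$l)))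
            = (\<Sum>l\<in>UNIV-{k}. 1 / (x $ k - x $ l) * (of_int n / 2 * (a l x - a k x)))"
          by (rule sum.cong[OF refl])
        then show ?thesis by (simp only:)
      qed
      finally show ?thesis .
    qed
    show "mat_has_deriv (\<lambda>z. A k (vupd x k z))
              (- (\<Sum>j\<in>UNIV - {k}. msmul (1 / (x $ k - x $ j)) (commutator (A k x) (A j x)))) (x $ k)"
      unfolding mat_has_deriv_def
    proof (intro allI)
      fix r s :: 2
      show "((\<lambda>z. A k (vupd x k z) $ r $ s) has_field_derivative
              (- (\<Sum>j\<in>UNIV - {k}. msmul (1 / (x $ k - x $ j)) (commutator (A k x) (A j x)))) $ r $ s) (at (x $ k))"
      proof (cases "r = 1 \<and> s = 2")
        case True
        have "(- (\<Sum>j\<in>UNIV - {k}. msmul (1 / (x $ k - x $ j)) (commutator (A k x) (A j x)))) $ r $ s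
            = - (\<Sum>l\<in>UNIV-{k}. 1 / (x $ k - x $ l) * (of_int n / 2 * (a l x - a k x)))"
          using True by (simp add: msmul_nth AA comm_schl)
        then show ?thesis using dA val True by (simp add: AA schl_12)
      next
        case False
        have "(- (\<Sum>j\<in>UNIV - {k}. msmul (1 / (x $ k - x $ j)) (commutator (A k x) (A j x)))) $ r $ s = 0"
          unfolding vector_uminus_component sum_component msmul_nth AA comm_schl if_not_P[OF False] by simp
        then show ?thesis using const_deriv[OF False] by simp
      qed
    qed
  qed
  have sum0: "(\<Sum>i\<in>UNIV. a i x) = 0" if x: "x \<in> U" for x
  proof -
    have injx: "inj (\<lambda>j. x $ j)" using distinct x by blast
    have "(\<Sum>i\<in>UNIV. a i x) = (\<Sum>m<2*g. c m * (\<Sum>i\<in>UNIV. I m x i))"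
      unfolding aI by (simp add: sum_distrib_left sum.swap[of _ UNIV])
    also have "\<dots> = 0"
      using cyc(3)[OF U(1) x injx ok n] unfolding I_def by simp
    finally show ?thesis .
  qed
  have P3: "\<forall>x\<in>U. \<forall>y\<in>U. - (\<Sum>i\<in>UNIV. A i x) = - (\<Sum>i\<in>UNIV. A i y)"
  proof (intro ballI)
    fix x y assume x: "x \<in> U" and y: "y \<in> U"
    have "(\<Sum>i\<in>UNIV. A i x) = (\<Sum>i\<in>UNIV. A i y)"
    proof (subst vec_eq_iff, intro allI, subst vec_eq_iff, intro allI)
      fix r s :: 2
      show "(\<Sum>i\<in>UNIV. A i x) $ r $ s = (\<Sum>i\<in>UNIV. A i y) $ r $ s"
      proof (cases "r = 1 \<and> s = 2")
        case True
        then show ?thesis using sum0[OF x] sum0[OF y] by (simp add: AA schl_12)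
      next
        case False
        have e: "\<And>i. A i x $ r $ s = A i y $ r $ s" unfolding AA by (rule schl_indep[OF False])
        show ?thesis by (simp add: e)
      qed
    qed
    then show "- (\<Sum>i\<in>UNIV. A i x) = - (\<Sum>i\<in>UNIV. A i y)" by simp
  qed
  show ?thesis using P1 P2 P3 by blast
qed


end
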